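(* Let $\mu_1,\dots,\mu_6\in\mathbb{C}$ be such that $g_2=\frac1{12}(4\mu_2+\mu_1^2)^2-2(\mu_1\mu_3+2\mu_4)$ and $g_3=\frac16(\mu_1\mu_3+2\mu_4)(4\mu_2+\mu_1^2)-\frac1{216}(4\mu_2+\mu_1^2)^3-4\mu_6-\mu_3^2$ satisfy $g_2^3-27g_3^2\ne0$, and let $\wp,\sigma,\zeta$ be the Weierstrass functions with these invariants. Choose $v,w$ with $\wp(v)=\frac1{12}(4\mu_2+\mu_1^2)$, $\wp'(w)=-\mu_3$, assume $\wp'(v)\ne0$ and put $\alpha=\wp'(w)/\wp'(v)$. Let $f$ be the exponential of the elliptic formal group law $F_\mu$, and let $\Psi$ be the solution near $u=0$ of $\Psi'+\frac{1}{f(u)}\Psi=0$ with $\lim_{u\to0}(\Psi(u)-\frac1u)$ finite. Then, near $u=0$, \[ \frac{1}{\Psi(u)}=\Phi(u;v)^{-1}\exp\Big(\frac{\mu_1}{2}u\Big)\Big(\frac{\Phi(u;v)}{\Phi(u;-v)}\Big)^{\frac12(1-\alpha)}, \] where $\Phi(u;v)=\frac{\sigma(v-u)}{\sigma(u)\sigma(v)}\exp(\zeta(v)u)$ and the power is the branch equal to $1$ at $u=0$.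
   Context: The elliptic formal group law $F_\mu$: on the cubic $Y^2Z+\mu_1XYZ+\mu_3YZ^2=X^3+\mu_2X^2Z+\mu_4XZ^2+\mu_6Z^3$ with chord-tangent group law (neutral element $O=(0:1:0)$, three collinear points sum to zero), Tate coordinates $t=-X/Y$, $s=-Z/Y$ give $s=t^3+\mu_1ts+\mu_2t^2s+\mu_3s^2+\mu_4ts^2+\mu_6s^3$ with $s(t)$ the power series solution with $s(0)=0$; $F_\mu(t_1,t_2)$ gives the $t$-coordinate of $P_1+P_2$ for $P_i=(t_i,s(t_i))$. Its exponential is the series $f$ with $f(0)=0$, $f'(0)=1$, $f(u+v)=F_\mu(f(u),f(v))$. $\wp'^2=4\wp^3-g_2\wp-g_3$, $\sigma$ is the Weierstrass sigma function (entire, odd, $\sigma(u)=u+O(u^5)$), $\zeta=\sigma'/\sigma$. The Hirzebruch genus with exponential $1/\Psi$ is called the general Krichever genus. *)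

theory Defs
  imports "HOL-Complex_Analysis.Complex_Analysis"
begin

definition wzeta :: "(complex \<Rightarrow> complex) \<Rightarrow> complex \<Rightarrow> complex" where
  "wzeta \<sigma> u = deriv \<sigma> u / \<sigma> u"

definition wp :: "(complex \<Rightarrow> complex) \<Rightarrow> complex \<Rightarrow> complex" where
  "wp \<sigma> u = - deriv (wzeta \<sigma>) u"

text \<open>These conditions determine sigma uniquely.\<close>

definition is_weierstrass_sigma :: "complex \<Rightarrow> complex \<Rightarrow> (complex \<Rightarrow> complex) \<Rightarrow> bool" where
  "is_weierstrass_sigma g2 g3 \<sigma> \<longleftrightarrow>
     \<sigma> holomorphic_on UNIV \<and>
     (\<forall>u. \<sigma> (- u) = - \<sigma> u) \<and>
     (\<exists>h. h holomorphic_on UNIV \<and> (\<forall>u. \<sigma> u = u + u ^ 5 * h u)) \<and>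
     (\<forall>u. \<sigma> u \<noteq> 0 \<longrightarrow>
        (deriv (wp \<sigma>) u) ^ 2 = 4 * (wp \<sigma> u) ^ 3 - g2 * wp \<sigma> u - g3)"

definition wPhi :: "(complex \<Rightarrow> complex) \<Rightarrow> complex \<Rightarrow> complex \<Rightarrow> complex" where
  "wPhi \<sigma> u v = \<sigma> (v - u) / (\<sigma> u * \<sigma> v) * exp (wzeta \<sigma> v * u)"

text \<open>The cubic in Tate coordinates t = -X/Y, s = -Z/Y.\<close>

definition tate_eq :: "complex \<Rightarrow> complex \<Rightarrow> complex \<Rightarrow> complex \<Rightarrow> complex \<Rightarrow> complex \<Rightarrow> complex \<Rightarrow> bool" where
  "tate_eq m1 m2 m3 m4 m6 t s \<longleftrightarrow>
     s = t ^ 3 + m1 * t * s + m2 * t ^ 2 * s + m3 * s ^ 2 + m4 * t * s ^ 2 + m6 * s ^ 3"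

text \<open>s is (the sum of) the power series solution s(t) with s(0) = 0, i.e. an analytic
  solution of the Tate equation near 0 with s(0) = 0 (unique by the implicit function theorem).\<close>

definition tate_s :: "complex \<Rightarrow> complex \<Rightarrow> complex \<Rightarrow> complex \<Rightarrow> complex \<Rightarrow> real \<Rightarrow> (complex \<Rightarrow> complex) \<Rightarrow> bool" where
  "tate_s m1 m2 m3 m4 m6 r s \<longleftrightarrow>
     r > 0 \<and> s holomorphic_on ball 0 r \<and> s 0 = 0 \<and>
     (\<forall>t\<in>ball 0 r. tate_eq m1 m2 m3 m4 m6 t (s t))"

text \<open>Chord-tangent law near O. Points P_i = (t_i, s(t_i)). The line through P1, P2
  (tangent line if P1 = P2) is s = lam * t + nu.  Substituting it into the Tate equation gives
  a cubic in t with leading coefficient -(1 + m2 lam + m4 lam^2 + m6 lam^3) and t^2-coefficient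
  -(m1 lam + m2 nu + m3 lam^2 + 2 m4 lam nu + 3 m6 lam^2 nu); its roots are t1, t2, t3, so the
  third intersection P3 = (t3, lam t3 + nu) is given by Vieta.  Then P1 + P2 = - P3, and the
  negation (x,y) |-> (x, -y - m1 x - m3) reads t |-> -t / (1 - m1 t - m3 s) in Tate coordinates.\<close>

definition chord_slope :: "(complex \<Rightarrow> complex) \<Rightarrow> complex \<Rightarrow> complex \<Rightarrow> complex" where
  "chord_slope s t1 t2 = (if t1 = t2 then deriv s t1 else (s t2 - s t1) / (t2 - t1))"

definition elliptic_fgl ::
  "complex \<Rightarrow> complex \<Rightarrow> complex \<Rightarrow> complex \<Rightarrow> complex \<Rightarrow> (complex \<Rightarrow> complex) \<Rightarrow> complex \<Rightarrow> complex \<Rightarrow> complex" where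
  "elliptic_fgl m1 m2 m3 m4 m6 s t1 t2 =
     (let lam = chord_slope s t1 t2;
          nu = s t1 - lam * t1;
          t3 = - t1 - t2 - (m1 * lam + m2 * nu + m3 * lam ^ 2 + 2 * m4 * lam * nu + 3 * m6 * lam ^ 2 * nu)
                          / (1 + m2 * lam + m4 * lam ^ 2 + m6 * lam ^ 3);
          s3 = lam * t3 + nu
      in - t3 / (1 - m1 * t3 - m3 * s3))"

definition fgl_exponential ::
  "complex \<Rightarrow> complex \<Rightarrow> complex \<Rightarrow> complex \<Rightarrow> complex \<Rightarrow> (complex \<Rightarrow> complex) \<Rightarrow> real \<Rightarrow> (complex \<Rightarrow> complex) \<Rightarrow> bool" where
  "fgl_exponential m1 m2 m3 m4 m6 s r f \<longleftrightarrow>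
     r > 0 \<and> f holomorphic_on ball 0 r \<and> f 0 = 0 \<and> deriv f 0 = 1 \<and>
     (\<forall>u v. u \<in> ball 0 r \<longrightarrow> v \<in> ball 0 r \<longrightarrow> u + v \<in> ball 0 r \<longrightarrow>
        f (u + v) = elliptic_fgl m1 m2 m3 m4 m6 s (f u) (f v))"

end

theory Submission
  imports Defs
begin


lemma conn_nonzero:
  fixes f :: "complex \<Rightarrow> complex"
  assumes hol: "f holomorphic_on D" and D: "open D" "connected D" and w: "w \<in> D" "f w \<noteq> 0"
  shows "connected {z\<in>D. f z \<noteq> 0}" "open {z\<in>D. f z \<noteq> 0}"
proof -
  have sp: "{z\<in>D. f z = 0} sparse_in D"
    unfolding sparse_in_open[OF D(1)]
  proof
    fix y assume y: "y \<in> D"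
    show "\<not> y islimpt {z\<in>D. f z = 0}"
    proof
      assume lim: "y islimpt {z\<in>D. f z = 0}"
      have "f w = 0"
        by (rule analytic_continuation[OF hol D(1) D(2) _ y lim _ w(1)]) auto
      with w show False by simp
    qed
  qed
  have "connected (D - {z\<in>D. f z = 0})"
    by (rule sparse_imp_connected[OF _ D(2) D(1) sp]) simp
  moreover have "D - {z\<in>D. f z = 0} = {z\<in>D. f z \<noteq> 0}" by auto
  ultimately show "connected {z\<in>D. f z \<noteq> 0}" by simp
  have "open (D \<inter> f -` (- {0}))"
    by (rule continuous_open_preimage[OF holomorphic_on_imp_continuous_on[OF hol] D(1)]) (simp add: open_Compl)
  moreover have "D \<inter> f -` (- {0}) = {z\<in>D. f z \<noteq> 0}" by auto
  ultimately show "open {z\<in>D. f z \<noteq> 0}" by simp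
qed
lemma chain_sub:
  fixes f :: "complex \<Rightarrow> complex"
  assumes "(f has_field_derivative D) (at (c - u))"
  shows "((\<lambda>x. f (c - x)) has_field_derivative - D) (at u)"
proof -
  have "((\<lambda>x. c - x) has_field_derivative -1) (at u)" by (auto intro!: derivative_eq_intros)
  from DERIV_chain2[OF assms this] show ?thesis by simp
qed

lemma chain_neg:
  fixes f :: "complex \<Rightarrow> complex"
  assumes "(f has_field_derivative D) (at (- u))"
  shows "((\<lambda>x. f (- x)) has_field_derivative - D) (at u)"
  using chain_sub[of f D 0 u] assms by simp


lemma alg_tate:
  fixes m1 m2 m3 m4 m6 g2 g3 P P' x y :: complex
  assumes g2: "g2 = (4 * m2 + m1 ^ 2) ^ 2 / 12 - 2 * (m1 * m3 + 2 * m4)"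
    and g3: "g3 = (m1 * m3 + 2 * m4) * (4 * m2 + m1 ^ 2) / 6 - (4 * m2 + m1 ^ 2) ^ 3 / 216
               - 4 * m6 - m3 ^ 2"
    and ode: "P' ^ 2 = 4 * P ^ 3 - g2 * P - g3"
    and x: "x = P - (4 * m2 + m1 ^ 2) / 12"
    and y: "2 * y = P' - m1 * x - m3"
  shows "y^2 + m1 * x * y + m3 * y = x^3 + m2 * x^2 + m4 * x + m6"
proof -
  have "P' = 2*y + m1*x + m3" using y by simp
  with ode have "(2*y + m1*x + m3)^2 = 4 * P ^ 3 - g2 * P - g3" by simp
  then show ?thesis unfolding g2 g3 x by (simp add: field_simps) algebra
qed

lemma alg_ft:
  fixes m1 m2 m3 m4 m6 g2 g3 P P' P'' x y :: complex
  assumes g2: "g2 = (4 * m2 + m1 ^ 2) ^ 2 / 12 - 2 * (m1 * m3 + 2 * m4)"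
    and g3: "g3 = (m1 * m3 + 2 * m4) * (4 * m2 + m1 ^ 2) / 6 - (4 * m2 + m1 ^ 2) ^ 3 / 216
               - 4 * m6 - m3 ^ 2"
    and ode: "P' ^ 2 = 4 * P ^ 3 - g2 * P - g3"
    and ode2: "P'' = 6 * P^2 - g2 / 2"
    and x: "x = P - (4 * m2 + m1 ^ 2) / 12"
    and y: "2 * y = P' - m1 * x - m3"
    and yn: "y \<noteq> 0"
  shows "- (P' * y - x * ((P'' - m1 * P') / 2)) / y^2
     = 1 - m1 * (-x/y) - m2 * (-x/y)^2 - 2 * m3 * (-1/y) - 2 * m4 * (-x/y) * (-1/y) - 3 * m6 * (-1/y)^2"
proof -
  have c: "y^2 + m1 * x * y + m3 * y = x^3 + m2 * x^2 + m4 * x + m6"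
    using alg_tate[OF g2 g3 ode x y] .
  have P': "P' = 2*y + m1*x + m3" using y by simp
  have P: "P = x + (4 * m2 + m1 ^ 2) / 12" using x by simp
  have yd: "(P'' - m1 * P') / 2 = 3*x^2 + 2*m2*x + m4 - m1*y"
    unfolding ode2 P' P g2 by (simp add: field_simps) algebra
  show ?thesis unfolding yd using yn c unfolding P' by (simp add: field_simps) algebra
qed


lemma alg_fgl:
  fixes m1 m2 m3 m4 m6 t L D0 t30 t31 E0 J :: complex
  assumes t: "t \<noteq> 0" and D0n: "D0 \<noteq> 0" and Ln: "L \<noteq> 0"
    and D0: "D0 = 1 + m2 * L + m4 * L^2 + m6 * L^3"
    and R: "L = t^2 * D0 + t * (m1 * L + m3 * L^2)"
    and t30: "t30 = - L / (t * D0)"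
    and t31: "t31 = -1 - (L/t) * (m1 + 2*m3*L) / D0 + L^2 * (m2 + 2*m4*L + 3*m6*L^2) / (t^2 * D0^2)"
    and E0: "E0 = L / (t^2 * D0)"
    and J: "J = t31 + m3 * L * t30 * (t30 / t - 1)"
  shows "- J / E0^2 = 1 - m1 * t - m2 * t^2 - 2 * m3 * (L*t) - 2 * m4 * t * (L*t) - 3 * m6 * (L*t)^2"
proof -
  define a where "a = 1 - m1*t - m3*t*L"
  have tD: "t^2 * D0 = L * a" using R unfolding a_def by (simp add: algebra_simps power2_eq_square)
  have p1: "t31 * (t^4 * D0^2) = - (t^4*D0^2) - t^3*L*(m1+2*m3*L)*D0 + t^2*L^2*(m2 + 2*m4*L + 3*m6*L^2)"
  proof -
    have a1: "(L/t) * (m1 + 2*m3*L) / D0 * (t^4 * D0^2) = t^3*L*(m1+2*m3*L)*D0"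
      using t D0n by (simp add: field_simps power2_eq_square power3_eq_cube power4_eq_xxxx)
    have a2: "L^2 * (m2 + 2*m4*L + 3*m6*L^2) / (t^2 * D0^2) * (t^4 * D0^2) = t^2*L^2*(m2 + 2*m4*L + 3*m6*L^2)"
      using t D0n by (simp add: field_simps power2_eq_square power3_eq_cube power4_eq_xxxx)
    have "t31 * (t^4 * D0^2) = - (t^4 * D0^2) - (L/t) * (m1 + 2*m3*L) / D0 * (t^4 * D0^2)
         + L^2 * (m2 + 2*m4*L + 3*m6*L^2) / (t^2 * D0^2) * (t^4 * D0^2)"
      unfolding t31 by (simp only: ring_distribs) simp
    then show ?thesis unfolding a1 a2 .
  qed
  have p2: "(m3 * L * t30 * (t30 / t - 1)) * (t^4 * D0^2) = m3*L^2*t*(L + t^2*D0)"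
    unfolding t30 using t D0n by (simp add: field_simps power2_eq_square power3_eq_cube power4_eq_xxxx)
  have "J * t^4 * D0^2 = - (t^4*D0^2) - t^3*L*(m1+2*m3*L)*D0 + t^2*L^2*(m2 + 2*m4*L + 3*m6*L^2)
        + m3*L^2*t*(L + t^2*D0)"
    unfolding J using p1 p2 by (simp add: algebra_simps)
  also have "\<dots> = L^2 * (-(a^2) - t*(m1+2*m3*L)*a + t^2*(m2 + 2*m4*L + 3*m6*L^2) + m3*t*L*(1 + a))"
  proof -
    have e1': "t^4*D0^2 = (t^2*D0)^2" by (simp add: power2_eq_square power4_eq_xxxx algebra_simps)
    have e1: "t^4*D0^2 = L^2 * a^2" unfolding e1' tD by (simp add: power_mult_distrib)
    have e2': "t^3*L*(m1+2*m3*L)*D0 = t*L*(m1+2*m3*L)*(t^2*D0)" by (simp add: power2_eq_square power3_eq_cube algebra_simps)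
    have e2: "t^3*L*(m1+2*m3*L)*D0 = L^2 * t * (m1+2*m3*L) * a" unfolding e2' tD by (simp add: power2_eq_square algebra_simps)
    have e3: "m3*L^2*t*(L + t^2*D0) = L^2 * m3*t*L*(1+a)" using tD by (simp add: algebra_simps power2_eq_square)
    show ?thesis unfolding e1 e2 e3 by (simp add: algebra_simps)
  qed
  also have "\<dots> = -(L^2) * (1 - m1 * t - m2 * t^2 - 2 * m3 * (L*t) - 2 * m4 * t * (L*t) - 3 * m6 * (L*t)^2)"
    unfolding a_def by (simp add: algebra_simps power2_eq_square)
  finally have "J * t^4 * D0^2 = -(L^2) * (1 - m1 * t - m2 * t^2 - 2 * m3 * (L*t) - 2 * m4 * t * (L*t) - 3 * m6 * (L*t)^2)" .
  then show ?thesis unfolding E0 using t D0n Ln by (simp add: field_simps)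
qed


locale wsig =
  fixes g2 g3 :: complex and \<sigma> :: "complex \<Rightarrow> complex"
  assumes sig: "is_weierstrass_sigma g2 g3 \<sigma>"
begin

abbreviation "Z \<equiv> wzeta \<sigma>"
abbreviation "P \<equiv> wp \<sigma>"
abbreviation "P' \<equiv> deriv (wp \<sigma>)"
abbreviation "P'' \<equiv> deriv (deriv (wp \<sigma>))"
definition "S = {u. \<sigma> u \<noteq> 0}"

lemma hol: "\<sigma> holomorphic_on A"
proof -
  have "\<sigma> holomorphic_on UNIV" using sig unfolding is_weierstrass_sigma_def by auto
  then show ?thesis using holomorphic_on_subset by blast
qed

lemma odd: "\<sigma> (- u) = - \<sigma> u"
  using sig unfolding is_weierstrass_sigma_def by auto

lemma ode: "u \<in> S \<Longrightarrow> (P' u) ^ 2 = 4 * (P u) ^ 3 - g2 * P u - g3"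
  using sig unfolding is_weierstrass_sigma_def S_def by auto

lemma cont: "continuous_on A \<sigma>"
  using hol holomorphic_on_imp_continuous_on by blast

lemma openS: "open S"
  unfolding S_def by (rule open_Collect_neq) (auto intro: cont)

lemma dhol: "deriv \<sigma> holomorphic_on A"
  by (rule holomorphic_on_subset[OF holomorphic_deriv[OF hol[of UNIV] open_UNIV]]) auto

lemma Z_eq: "Z = (\<lambda>u. deriv \<sigma> u / \<sigma> u)"
  by (rule ext) (simp add: wzeta_def)

lemma P_eq: "P = (\<lambda>u. - deriv Z u)"
  by (rule ext) (simp add: wp_def)

lemma Z_hol: "Z holomorphic_on S"
  unfolding Z_eq by (intro holomorphic_intros dhol hol) (auto simp: S_def)

lemma P_hol: "P holomorphic_on S"
  unfolding P_eq by (intro holomorphic_intros holomorphic_deriv Z_hol openS)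

lemma P'_hol: "P' holomorphic_on S"
  by (intro holomorphic_deriv P_hol openS)

lemma P''_hol: "P'' holomorphic_on S"
  by (intro holomorphic_deriv P'_hol openS)

lemma Z_der: "u \<in> S \<Longrightarrow> (Z has_field_derivative - P u) (at u)"
  using holomorphic_derivI[OF Z_hol openS, of u UNIV] by (simp add: P_eq)

lemma P_der: "u \<in> S \<Longrightarrow> (P has_field_derivative P' u) (at u)"
  using holomorphic_derivI[OF P_hol openS, of u UNIV] by simp

lemma P'_der: "u \<in> S \<Longrightarrow> (P' has_field_derivative P'' u) (at u)"
  using holomorphic_derivI[OF P'_hol openS, of u UNIV] by simp

lemma h_ex: obtains h where "h holomorphic_on UNIV" "\<And>u. \<sigma> u = u + u^5 * h u"
proof -
  have "\<exists>h. h holomorphic_on UNIV \<and> (\<forall>u. \<sigma> u = u + u ^ 5 * h u)"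
    using sig unfolding is_weierstrass_sigma_def by blast
  then obtain h where h: "h holomorphic_on UNIV" "\<forall>u. \<sigma> u = u + u ^ 5 * h u" by blast
  show ?thesis by (rule that[OF h(1)]) (use h(2) in simp)
qed

lemma local_exp:
  obtains r k m n where "r > 0" "k holomorphic_on ball 0 r" "m holomorphic_on ball 0 r"
    "n holomorphic_on ball 0 r"
    "\<And>u. u \<in> ball 0 r \<Longrightarrow> u \<noteq> 0 \<Longrightarrow> u \<in> S"
    "\<And>u. u \<in> ball 0 r \<Longrightarrow> u \<noteq> 0 \<Longrightarrow> Z u = 1/u + u^3 * k u"
    "\<And>u. u \<in> ball 0 r \<Longrightarrow> u \<noteq> 0 \<Longrightarrow> P u = 1/u^2 + u^2 * m u"
    "\<And>u. u \<in> ball 0 r \<Longrightarrow> u \<noteq> 0 \<Longrightarrow> P' u = -2/u^3 + u * n u"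
proof -
  obtain h where h: "h holomorphic_on UNIV" "\<And>u. \<sigma> u = u + u^5 * h u" using h_ex by blast
  define e where "e u = 1 + u^4 * h u" for u
  have ehol: "e holomorphic_on UNIV" unfolding e_def by (intro holomorphic_intros h(1))
  have "continuous (at 0) e"
    using holomorphic_on_imp_continuous_on[OF ehol] continuous_on_eq_continuous_at[OF open_UNIV, of e] by auto
  then obtain r where r: "r > 0" "\<And>u. dist 0 u < r \<Longrightarrow> e u \<noteq> 0"
    using continuous_at_avoid[of 0 e 0] by (auto simp: e_def)
  have rb: "e u \<noteq> 0" if "u \<in> ball 0 r" for u using r(2) that by auto
  have sig_e: "\<sigma> u = u * e u" for u unfolding h(2) e_def by (simp add: algebra_simps power_numeral_reduce)
  have inS: "u \<in> S" if "u \<in> ball 0 r" "u \<noteq> 0" for u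
    using rb[OF that(1)] that(2) unfolding S_def sig_e by simp
  have hder: "(h has_field_derivative deriv h u) (at u)" for u
    using holomorphic_derivI[OF h(1) open_UNIV, of u UNIV] by simp
  have sig_fun: "\<sigma> = (\<lambda>u. u + u^5 * h u)" using h(2) by (rule ext)
  have dsig: "deriv \<sigma> u = 1 + 5 * u^4 * h u + u^5 * deriv h u" for u
  proof -
    have "((\<lambda>u. u + u^5 * h u) has_field_derivative 1 + 5 * u^4 * h u + u^5 * deriv h u) (at u)"
      by (auto intro!: derivative_eq_intros hder simp: algebra_simps)
    then show ?thesis unfolding sig_fun by (rule DERIV_imp_deriv)
  qed
  define k where "k u = (4 * h u + u * deriv h u) / e u" for u
  have dhh: "deriv h holomorphic_on UNIV" by (rule holomorphic_deriv[OF h(1) open_UNIV])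
  have khol: "k holomorphic_on ball 0 r" unfolding k_def
    by (intro holomorphic_intros holomorphic_on_subset[OF h(1)] holomorphic_on_subset[OF dhh]
          holomorphic_on_subset[OF ehol] rb) auto
  have Zk: "Z u = 1/u + u^3 * k u" if "u \<in> ball 0 r" "u \<noteq> 0" for u
  proof -
    have en: "e u \<noteq> 0" using rb that by auto
    show ?thesis unfolding wzeta_def dsig sig_e k_def using en that(2)
      by (simp add: field_simps e_def) (simp add: algebra_simps power_numeral_reduce)
  qed
  define B where "B = ball (0::complex) r - {0}"
  have openB: "open B" unfolding B_def by (simp add: open_Diff)
  have kder: "(k has_field_derivative deriv k u) (at u)" if "u \<in> ball 0 r" for u
    using holomorphic_derivI[OF khol open_ball that, of UNIV] by simp
  define m where "m u = - 3 * k u - u * deriv k u" for u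
  have dkhol: "deriv k holomorphic_on ball 0 r" by (rule holomorphic_deriv[OF khol open_ball])
  have mhol: "m holomorphic_on ball 0 r" unfolding m_def by (intro holomorphic_intros khol dkhol)
  have Pm: "P u = 1/u^2 + u^2 * m u" if "u \<in> ball 0 r" "u \<noteq> 0" for u
  proof -
    have uB: "u \<in> B" using that unfolding B_def by auto
    have "((\<lambda>x. 1/x + x^3 * k x) has_field_derivative (- 1/u^2 + 3 * u^2 * k u + u^3 * deriv k u)) (at u)"
      using that by (auto intro!: derivative_eq_intros kder simp: power2_eq_square field_simps)
    then have "(Z has_field_derivative (- 1/u^2 + 3 * u^2 * k u + u^3 * deriv k u)) (at u)"
      by (rule has_field_derivative_transform_within_open[OF _ openB uB]) (auto simp: B_def Zk)
    then have "deriv Z u = - 1/u^2 + 3 * u^2 * k u + u^3 * deriv k u" by (rule DERIV_imp_deriv)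
    then show ?thesis unfolding P_eq m_def by (simp add: algebra_simps power2_eq_square power3_eq_cube)
  qed
  have mder: "(m has_field_derivative deriv m u) (at u)" if "u \<in> ball 0 r" for u
    using holomorphic_derivI[OF mhol open_ball that, of UNIV] by simp
  define n where "n u = 2 * m u + u * deriv m u" for u
  have dmhol: "deriv m holomorphic_on ball 0 r" by (rule holomorphic_deriv[OF mhol open_ball])
  have nhol: "n holomorphic_on ball 0 r" unfolding n_def by (intro holomorphic_intros mhol dmhol)
  have Pn: "P' u = -2/u^3 + u * n u" if "u \<in> ball 0 r" "u \<noteq> 0" for u
  proof -
    have uB: "u \<in> B" using that unfolding B_def by auto
    have "((\<lambda>x. 1/x^2 + x^2 * m x) has_field_derivative (-2/u^3 + 2 * u * m u + u^2 * deriv m u)) (at u)"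
      using that by (auto intro!: derivative_eq_intros mder simp: power2_eq_square power3_eq_cube field_simps)
    then have "(P has_field_derivative (-2/u^3 + 2 * u * m u + u^2 * deriv m u)) (at u)"
      by (rule has_field_derivative_transform_within_open[OF _ openB uB]) (auto simp: B_def Pm)
    then have "P' u = -2/u^3 + 2 * u * m u + u^2 * deriv m u" by (rule DERIV_imp_deriv)
    then show ?thesis unfolding n_def by (simp add: algebra_simps power2_eq_square)
  qed
  show ?thesis using that[OF r(1) khol mhol nhol inS Zk Pm Pn] .
qed

lemma S_neg: "u \<in> S \<Longrightarrow> - u \<in> S" unfolding S_def by (simp add: odd)

lemma dsig_even: "deriv \<sigma> (- u) = deriv \<sigma> u"
proof -
  have sf: "\<sigma> = (\<lambda>x. - \<sigma> (- x))" by (rule ext) (simp add: odd)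
  have d: "(\<sigma> has_field_derivative deriv \<sigma> x) (at x)" for x
    using holomorphic_derivI[OF hol open_UNIV, of x UNIV] by simp
  have "((\<lambda>x. - \<sigma> (- x)) has_field_derivative - (- deriv \<sigma> (- u))) (at u)"
    by (intro derivative_intros chain_neg d)
  then have "deriv \<sigma> u = deriv \<sigma> (- u)" by (subst sf) (simp add: DERIV_imp_deriv)
  then show ?thesis by simp
qed

lemma Z_odd: "Z (- u) = - Z u"
  by (simp add: wzeta_def dsig_even odd)

lemma P_even: assumes "u \<in> S" shows "P (- u) = P u"
proof -
  have zf: "Z = (\<lambda>x. - Z (- x))" by (rule ext) (simp add: Z_odd)
  have "((\<lambda>x. - Z (- x)) has_field_derivative - (- (- P (- u)))) (at u)"
    by (intro derivative_intros chain_neg Z_der S_neg assms)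
  then have "deriv Z u = - P (- u)" by (subst zf) (simp add: DERIV_imp_deriv)
  then show ?thesis unfolding P_eq by simp
qed

lemma P'_odd: assumes "u \<in> S" shows "P' (- u) = - P' u"
proof -
  have "((\<lambda>x. P (- x)) has_field_derivative - P' (- u)) (at u)"
    by (intro chain_neg P_der S_neg assms)
  then have "(P has_field_derivative - P' (- u)) (at u)"
    by (rule has_field_derivative_transform_within_open[OF _ openS assms]) (simp add: P_even)
  then have "P' u = - P' (- u)" by (rule DERIV_imp_deriv)
  then show ?thesis by simp
qed

lemma conn_S: "connected S"
proof -
  obtain r k m n where r: "r > 0" "\<And>u. u \<in> ball 0 r \<Longrightarrow> u \<noteq> 0 \<Longrightarrow> u \<in> S"
    by (rule local_exp) blast
  have "of_real (r/2) \<in> S" by (rule r(2)) (use r(1) in auto)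
  then have "connected {z\<in>UNIV. \<sigma> z \<noteq> 0}"
    by (intro conn_nonzero[OF hol open_UNIV connected_UNIV, of "of_real (r/2)"]) (auto simp: S_def)
  then show ?thesis unfolding S_def by simp
qed

lemma P''_eq_aux: assumes "u \<in> S" shows "P' u * (2 * P'' u - 12 * (P u)^2 + g2) = 0"
proof -
  have "((\<lambda>x. (P' x)^2 - (4 * (P x)^3 - g2 * P x - g3)) has_field_derivative
          2 * P' u * P'' u - (12 * (P u)^2 * P' u - g2 * P' u)) (at u)"
    by (auto intro!: derivative_eq_intros P_der P'_der assms simp: algebra_simps power2_eq_square power3_eq_cube)
  moreover have "((\<lambda>x. (P' x)^2 - (4 * (P x)^3 - g2 * P x - g3)) has_field_derivative 0) (at u)"
    by (rule has_field_derivative_transform_within_open[OF DERIV_const openS assms]) (simp add: ode)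
  ultimately have "2 * P' u * P'' u - (12 * (P u)^2 * P' u - g2 * P' u) = 0" by (rule DERIV_unique)
  then show ?thesis by (simp add: algebra_simps)
qed

lemma P''_eq: assumes "u \<in> S" shows "P'' u = 6 * (P u)^2 - g2 / 2"
proof -
  obtain r k m n where r: "r > 0" "n holomorphic_on ball 0 r" "\<And>u. u \<in> ball 0 r \<Longrightarrow> u \<noteq> 0 \<Longrightarrow> u \<in> S"
    "\<And>u. u \<in> ball 0 r \<Longrightarrow> u \<noteq> 0 \<Longrightarrow> P' u = -2/u^3 + u * n u"
    by (rule local_exp) blast
  define g where "g u = -2 + u^4 * n u" for u
  have "continuous (at 0) g"
  proof -
    have "continuous_on (ball 0 r) g" unfolding g_def
      by (intro holomorphic_on_imp_continuous_on holomorphic_intros r(2))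
    then show ?thesis using continuous_on_eq_continuous_at[of "ball 0 r" g] r(1) by simp
  qed
  then obtain r2 where r2: "r2 > 0" "\<And>u. dist 0 u < r2 \<Longrightarrow> g u \<noteq> 0"
    using continuous_at_avoid[of 0 g 0] by (auto simp: g_def)
  define s where "s = ball 0 (min r r2) - {0::complex}"
  have sS: "s \<subseteq> S"
  proof
    fix x assume "x \<in> s"
    then have "x \<in> ball 0 r" "x \<noteq> 0" unfolding s_def by auto
    then show "x \<in> S" by (rule r(3))
  qed
  have ne: "s \<noteq> {}"
  proof -
    have "of_real (min r r2 / 2) \<in> s" unfolding s_def using r(1) r2(1) by auto
    then show ?thesis by blast
  qed
  have eq: "P'' z = 6 * (P z)^2 - g2 / 2" if "z \<in> s" for z
  proof -
    have z: "z \<in> ball 0 r" "z \<noteq> 0" "dist 0 z < r2" using that unfolding s_def by auto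
    have "z^3 * P' z = g z" unfolding r(4)[OF z(1,2)] g_def using z(2)
      by (simp add: field_simps power_numeral_reduce)
    then have "P' z \<noteq> 0" using r2(2)[OF z(3)] by auto
    then have "2 * P'' z - 12 * (P z)^2 + g2 = 0" using P''_eq_aux[OF sS[THEN subsetD, OF that]] by simp
    then show ?thesis by (simp add: field_simps)
  qed
  show ?thesis
    by (rule analytic_continuation_open[of s S, OF _ openS ne conn_S sS P''_hol _ eq assms])
       (auto simp: s_def intro!: holomorphic_intros P_hol)
qed

end


lemma alg_Y:
  fixes pu pv qu qv ru rv g2 g3 :: complex
  assumes "qu^2 = 4 * pu^3 - g2 * pu - g3" "qv^2 = 4 * pv^3 - g2 * pv - g3"
    "ru = 6 * pu^2 - g2/2" "rv = 6 * pv^2 - g2/2" "pu \<noteq> pv"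
  shows "- pu + - (- pv) + ((ru - - rv) * (pu - pv) - (qu - qv) * (qu - - qv)) / ((pu - pv) * (pu - pv)) / 2 = 0"
proof -
  have "(qu - qv) * (qu - - qv) = qu^2 - qv^2" by (simp add: algebra_simps power2_eq_square)
  also have "\<dots> = 4 * pu^3 - g2 * pu - 4 * pv^3 + g2 * pv" using assms(1,2) by simp
  finally have e: "(qu - qv) * (qu - - qv) = 4 * pu^3 - g2 * pu - 4 * pv^3 + g2 * pv" .
  have "(ru - - rv) * (pu - pv) - (qu - qv) * (qu - - qv) = 2 * (pu - pv)^3"
    unfolding e assms(3,4) by (simp add: algebra_simps power2_eq_square power3_eq_cube)
  moreover have "2 * (pu - pv)^3 / ((pu - pv) * (pu - pv)) / 2 = pu - pv"
    using assms(5) by (simp add: power3_eq_cube)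
  ultimately show ?thesis by simp
qed

lemma alg_Yh:
  fixes u k m n pv qv zv D :: complex
  assumes u: "u \<noteq> 0" and D: "D \<noteq> 0" and Dd: "D = 1 + u^4 * m - u^2 * pv"
  shows "1/u + u^3 * k + zv + ((-2/u^3 + u * n) - qv) / (D / u^2) / 2
    = u^3 * k + u * (2 * u^2 * m + u^2 * n - 2 * pv - u * qv) / (2 * D) + zv"
proof -
  have e: "2 * D + (-2 + u^4 * n - u^3 * qv) = u^2 * (2 * u^2 * m + u^2 * n - 2 * pv - u * qv)"
    unfolding Dd by (simp add: algebra_simps power_numeral_reduce)
  have "1/u + ((-2/u^3 + u * n) - qv) / (D / u^2) / 2 = (2 * D + (-2 + u^4 * n - u^3 * qv)) / (2 * u * D)"
    using u D by (simp add: field_simps power_numeral_reduce)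
  also have "\<dots> = u * (2 * u^2 * m + u^2 * n - 2 * pv - u * qv) / (2 * D)"
    unfolding e using u D by (simp add: field_simps power_numeral_reduce)
  finally show ?thesis by (simp add: algebra_simps)
qed

lemma hol_tendsto:
  fixes f :: "complex \<Rightarrow> complex"
  assumes "f holomorphic_on A" "open A" "x \<in> A"
  shows "(f \<longlongrightarrow> f x) (at x)"
proof -
  have "continuous_on A f" using holomorphic_on_imp_continuous_on[OF assms(1)] .
  then have "isCont f x" using continuous_on_eq_continuous_at[OF assms(2)] assms(3) by blast
  then show ?thesis by (simp add: isCont_def)
qed

context wsig
begin

lemma Z_tendsto: "c \<in> S \<Longrightarrow> (Z \<longlongrightarrow> Z c) (at c)" by (rule hol_tendsto[OF Z_hol openS])
lemma P_tendsto: "c \<in> S \<Longrightarrow> (P \<longlongrightarrow> P c) (at c)" by (rule hol_tendsto[OF P_hol openS])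
lemma P'_tendsto: "c \<in> S \<Longrightarrow> (P' \<longlongrightarrow> P' c) (at c)" by (rule hol_tendsto[OF P'_hol openS])

lemma comp_sub_tendsto:
  fixes f :: "complex \<Rightarrow> complex"
  assumes "(f \<longlongrightarrow> f c) (at c)"
  shows "((\<lambda>u. f (c - u)) \<longlongrightarrow> f c) (at 0)"
proof -
  have "isCont f c" using assms by (simp add: isCont_def)
  moreover have "((\<lambda>u. c - u) \<longlongrightarrow> c) (at (0::complex))" by (auto intro!: tendsto_eq_intros)
  ultimately show ?thesis by (rule isCont_tendsto_compose)
qed

lemma ev_sub_S: "c \<in> S \<Longrightarrow> eventually (\<lambda>u. c - u \<in> S) (at 0)"
proof -
  assume c: "c \<in> S"
  have "((\<lambda>u. c - u) \<longlongrightarrow> c) (at (0::complex))" by (auto intro!: tendsto_eq_intros)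
  then show ?thesis using openS c by (rule topological_tendstoD)
qed

lemma zeta_add:
  assumes a: "a \<in> S" and b: "b \<in> S" and ab: "a + b \<in> S" and ne: "P a \<noteq> P b"
  shows "Z (a + b) = Z a + Z b + (P' a - P' b) / (P a - P b) / 2"
proof -
  define c where "c = a + b"
  have c: "c \<in> S" using ab c_def by simp
  define U where "U = {u\<in>UNIV. \<sigma> u * \<sigma> (c - u) \<noteq> 0}"
  have aU: "\<sigma> a * \<sigma> (c - a) \<noteq> 0" using a b unfolding c_def S_def by simp
  have hU: "(\<lambda>u. \<sigma> u * \<sigma> (c - u)) holomorphic_on UNIV"
  proof -
    have dsig: "(\<sigma> has_field_derivative deriv \<sigma> x) (at x)" for x
      using holomorphic_derivI[OF hol open_UNIV, of x UNIV] by simp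
    show ?thesis unfolding holomorphic_on_open[OF open_UNIV]
      using DERIV_mult[OF dsig chain_sub[OF dsig]] by blast
  qed
  have U: "connected U" "open U"
    using conn_nonzero[OF hU open_UNIV connected_UNIV _ aU] unfolding U_def by auto
  have U_S: "u \<in> S" "c - u \<in> S" if "u \<in> U" for u using that unfolding U_def S_def by auto
  define f where "f u = P u - P (c - u)" for u
  have fder: "(f has_field_derivative P' u - - P' (c - u)) (at u)" if "u \<in> U" for u
    unfolding f_def by (intro DERIV_diff P_der chain_sub U_S that)
  have fhol: "f holomorphic_on U"
    using fder holomorphic_on_open[OF U(2)] by blast
  have fa: "f a \<noteq> 0" using ne unfolding f_def c_def by simp
  have aU': "a \<in> U" using aU unfolding U_def by simp
  define T where "T = {u\<in>U. f u \<noteq> 0}"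
  have T: "connected T" "open T" using conn_nonzero[OF fhol U(2) U(1) aU' fa] unfolding T_def by auto
  have aT: "a \<in> T" using aU' fa unfolding T_def by simp
  define Y where "Y u = Z u + Z (c - u) + (P' u - P' (c - u)) / f u / 2" for u
  have Yder: "(Y has_field_derivative 0) (at u)" if u: "u \<in> T" for u
  proof -
    have uU: "u \<in> U" and fu: "f u \<noteq> 0" using u unfolding T_def by auto
    have h1: "((\<lambda>u. P' u - P' (c - u)) has_field_derivative P'' u - - P'' (c - u)) (at u)"
      by (intro DERIV_diff P'_der chain_sub U_S uU)
    have h2: "((\<lambda>u. (P' u - P' (c - u)) / f u) has_field_derivative
        ((P'' u - - P'' (c - u)) * f u - (P' u - P' (c - u)) * (P' u - - P' (c - u))) / (f u * f u)) (at u)"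
      by (rule DERIV_divide[OF h1 fder[OF uU] fu])
    have h3: "(Y has_field_derivative (- P u) + - (- P (c - u)) +
        ((P'' u - - P'' (c - u)) * f u - (P' u - P' (c - u)) * (P' u - - P' (c - u))) / (f u * f u) / 2) (at u)"
      unfolding Y_def[abs_def]
      by (intro DERIV_add DERIV_cdivide h2 Z_der chain_sub U_S uU)
    have "(- P u) + - (- P (c - u)) +
        ((P'' u - - P'' (c - u)) * f u - (P' u - P' (c - u)) * (P' u - - P' (c - u))) / (f u * f u) / 2 = 0"
      unfolding f_def
      by (rule alg_Y[OF ode ode P''_eq P''_eq, OF U_S(1)[OF uU] U_S(2)[OF uU] U_S(1)[OF uU] U_S(2)[OF uU]])
         (use fu in \<open>simp add: f_def\<close>)
    with h3 show ?thesis by simp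
  qed
  have Ycont: "continuous_on T Y"
    using Yder by (intro continuous_at_imp_continuous_on) (auto intro: DERIV_isCont)
  obtain K0 where K0: "\<And>x. x \<in> T \<Longrightarrow> Y x = K0"
    using DERIV_zero_connected_constant[OF T(1) T(2) finite.emptyI Ycont] Yder by blast
  obtain r k m n where r: "r > 0" "k holomorphic_on ball 0 r" "m holomorphic_on ball 0 r"
    "n holomorphic_on ball 0 r"
    "\<And>u. u \<in> ball 0 r \<Longrightarrow> u \<noteq> 0 \<Longrightarrow> u \<in> S"
    "\<And>u. u \<in> ball 0 r \<Longrightarrow> u \<noteq> 0 \<Longrightarrow> Z u = 1/u + u^3 * k u"
    "\<And>u. u \<in> ball 0 r \<Longrightarrow> u \<noteq> 0 \<Longrightarrow> P u = 1/u^2 + u^2 * m u"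
    "\<And>u. u \<in> ball 0 r \<Longrightarrow> u \<noteq> 0 \<Longrightarrow> P' u = -2/u^3 + u * n u"
    by (rule local_exp) blast
  have k0: "(k \<longlongrightarrow> k 0) (at 0)" by (rule hol_tendsto[OF r(2) open_ball]) (use r in simp)
  have m0: "(m \<longlongrightarrow> m 0) (at 0)" by (rule hol_tendsto[OF r(3) open_ball]) (use r in simp)
  have n0: "(n \<longlongrightarrow> n 0) (at 0)" by (rule hol_tendsto[OF r(4) open_ball]) (use r in simp)
  define Dd where "Dd u = 1 + u^4 * m u - u^2 * P (c - u)" for u
  define Yh where "Yh u = u^3 * k u + u * (2 * u^2 * m u + u^2 * n u - 2 * P (c - u) - u * P' (c - u)) / (2 * Dd u)
     + Z (c - u)" for u
  have Pc: "((\<lambda>u. P (c - u)) \<longlongrightarrow> P c) (at 0)" by (rule comp_sub_tendsto[OF P_tendsto[OF c]])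
  have P'c: "((\<lambda>u. P' (c - u)) \<longlongrightarrow> P' c) (at 0)" by (rule comp_sub_tendsto[OF P'_tendsto[OF c]])
  have Zc: "((\<lambda>u. Z (c - u)) \<longlongrightarrow> Z c) (at 0)" by (rule comp_sub_tendsto[OF Z_tendsto[OF c]])
  have Dd0: "(Dd \<longlongrightarrow> 1) (at 0)"
    unfolding Dd_def[abs_def]
    by (rule tendsto_eq_intros refl m0 Pc tendsto_ident_at | simp)+
  have Yh0: "(Yh \<longlongrightarrow> Z c) (at 0)"
    unfolding Yh_def[abs_def]
    by (rule tendsto_eq_intros refl m0 k0 n0 Dd0 Pc P'c Zc tendsto_ident_at | simp)+
  have ev1: "eventually (\<lambda>u. u \<in> ball 0 r \<and> u \<noteq> 0) (at (0::complex))"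
    using r(1) by (auto simp: eventually_at dist_commute intro!: exI[of _ r])
  have ev2: "eventually (\<lambda>u. Dd u \<noteq> 0) (at 0)"
    using Dd0 by (rule tendsto_imp_eventually_ne) simp
  have ev: "eventually (\<lambda>u. u \<in> T \<and> Y u = Yh u) (at 0)"
    using ev1 ev2 ev_sub_S[OF c]
  proof eventually_elim
    case (elim u)
    then have u: "u \<in> ball 0 r" "u \<noteq> 0" "Dd u \<noteq> 0" "c - u \<in> S" by auto
    have uS: "u \<in> S" by (rule r(5)[OF u(1,2)])
    have fu: "f u = Dd u / u^2" unfolding f_def Dd_def r(7)[OF u(1,2)] using u(2)
      by (simp add: field_simps)
    have fu0: "f u \<noteq> 0" using fu u by simp
    have uT: "u \<in> T" unfolding T_def U_def using uS u(4) fu0 by (simp add: S_def)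
    have "Y u = Yh u"
      unfolding Y_def Yh_def fu r(6)[OF u(1,2)] r(8)[OF u(1,2)]
      by (rule alg_Yh[OF u(2,3) Dd_def])
    with uT show ?case by simp
  qed
  have "(Y \<longlongrightarrow> K0) (at 0)"
  proof (rule tendsto_eventually)
    show "eventually (\<lambda>u. Y u = K0) (at 0)" using ev by eventually_elim (use K0 in force)
  qed
  moreover have "(Y \<longlongrightarrow> Z c) (at 0)"
  proof (rule Lim_transform_eventually[OF Yh0])
    show "eventually (\<lambda>u. Yh u = Y u) (at 0)" using ev by eventually_elim simp
  qed
  ultimately have "K0 = Z c" by (rule tendsto_unique[rotated]) simp
  then have "Y a = Z c" using K0[OF aT] by simp
  then show ?thesis unfolding Y_def f_def c_def by simp
qed

end


lemma alg_fgl_full: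
  fixes m1 m2 m3 m4 m6 t s L N0 N1 D0 D1 t30 t31 s30 s31 E0 E1 :: complex
  assumes rel: "s = t ^ 3 + m1 * t * s + m2 * t ^ 2 * s + m3 * s ^ 2 + m4 * t * s ^ 2 + m6 * s ^ 3"
    and t: "t \<noteq> 0" and D0n: "D0 \<noteq> 0" and E0n: "E0 \<noteq> 0"
    and L: "L = s / t"
    and N0: "N0 = m1 * L + m3 * L^2"
    and N1: "N1 = m1 * (L/t) + m2 * (-L) + 2 * m3 * L * (L/t) + 2 * m4 * L * (-L) + 3 * m6 * L^2 * (-L)"
    and D0: "D0 = 1 + m2 * L + m4 * L^2 + m6 * L^3"
    and D1: "D1 = m2 * (L/t) + 2 * m4 * L * (L/t) + 3 * m6 * L^2 * (L/t)"
    and t30: "t30 = -t - N0 / D0"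
    and t31: "t31 = -1 - (N1 * D0 - N0 * D1) / (D0 * D0)"
    and s31: "s31 = (L/t) * t30 + L * t31 + (-L)"
    and E0: "E0 = 1 - m1 * t30 - m3 * (L * t30)"
    and E1: "E1 = - m1 * t31 - m3 * s31"
  shows "- (t31 * E0 - t30 * E1) / (E0 * E0) = 1 - m1 * t - m2 * t^2 - 2 * m3 * s - 2 * m4 * t * s - 3 * m6 * s^2"
proof -
  have sL: "s = L * t" using t unfolding L by simp
  have R: "L = t^2 * D0 + t * (m1 * L + m3 * L^2)"
  proof -
    have "L * t = t * (t^2 * D0 + t * (m1 * L + m3 * L^2))" using rel unfolding sL D0
      by (simp add: algebra_simps power2_eq_square power3_eq_cube)
    then show ?thesis using t by (simp add: mult.commute)
  qed
  have t30': "t30 = - L / (t * D0)"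
    unfolding t30 N0 using t D0n by (subst R) (simp add: field_simps power2_eq_square)
  have E0': "E0 = L / (t^2 * D0)"
    unfolding E0 t30' using t D0n by (subst (3) R) (simp add: field_simps power2_eq_square)
  have Ln: "L \<noteq> 0" using E0n E0' by auto
  define Dl where "Dl = m2 + 2*m4*L + 3*m6*L^2"
  have N1': "N1 = (L/t) * (m1 + 2*m3*L) - L * Dl" unfolding N1 Dl_def by (simp add: algebra_simps power2_eq_square)
  have D1': "D1 = (L/t) * Dl" unfolding D1 Dl_def by (simp add: algebra_simps power2_eq_square)
  have DN: "D0 + N0 / t = L / t^2"
  proof -
    have "L / t^2 = (t^2 * D0 + t * N0) / t^2" unfolding N0 by (subst R) simp
    also have "\<dots> = D0 + N0 / t" using t by (simp add: field_simps power2_eq_square)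
    finally show ?thesis by simp
  qed
  have "N1 * D0 - N0 * D1 = (L/t) * (m1 + 2*m3*L) * D0 - L * Dl * (D0 + N0 / t)"
    unfolding N1' D1' by (simp add: algebra_simps)
  also have "\<dots> = (L/t) * (m1 + 2*m3*L) * D0 - L^2 * Dl / t^2" unfolding DN by (simp add: power2_eq_square)
  finally have ND: "N1 * D0 - N0 * D1 = (L/t) * (m1 + 2*m3*L) * D0 - L^2 * Dl / t^2" .
  have t31': "t31 = -1 - (L/t) * (m1 + 2*m3*L) / D0 + L^2 * (m2 + 2*m4*L + 3*m6*L^2) / (t^2 * D0^2)"
  proof -
    have "(N1 * D0 - N0 * D1) / (D0 * D0) = (L/t) * (m1 + 2*m3*L) / D0 - L^2 * Dl / (t^2 * D0^2)"
      unfolding ND using D0n t by (simp add: field_simps power2_eq_square)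
    then show ?thesis unfolding t31 Dl_def by simp
  qed
  define J where "J = t31 + m3 * L * t30 * (t30 / t - 1)"
  have JJ: "t31 * E0 - t30 * E1 = J"
    unfolding J_def E0 E1 s31 using t by (simp add: field_simps power2_eq_square)
  have "- J / E0^2 = 1 - m1 * t - m2 * t^2 - 2 * m3 * (L*t) - 2 * m4 * t * (L*t) - 3 * m6 * (L*t)^2"
    by (rule alg_fgl[OF t D0n Ln D0 R t30' t31' E0' J_def])
  then show ?thesis unfolding JJ sL by (simp add: power2_eq_square)
qed

lemma alg_tate2:
  fixes m1 m2 m3 m4 m6 x y :: complex
  assumes c: "y^2 + m1 * x * y + m3 * y = x^3 + m2 * x^2 + m4 * x + m6" and y: "y \<noteq> 0"
  shows "tate_eq m1 m2 m3 m4 m6 (-x/y) (-1/y)"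
proof -
  define iy where "iy = 1 / y"
  have yi: "y * iy = 1" using y unfolding iy_def by simp
  have e1: "-x/y = -x * iy" "-1/y = - iy" unfolding iy_def by simp_all
  have "- iy = (-x * iy)^3 + m1 * (-x * iy) * (- iy) + m2 * (-x * iy)^2 * (- iy) + m3 * (- iy)^2
      + m4 * (-x * iy) * (- iy)^2 + m6 * (- iy)^3"
    using c yi by algebra
  then show ?thesis unfolding tate_eq_def e1 .
qed

lemma alg_uniq:
  fixes m1 m2 m3 m4 m6 t a b :: complex
  assumes "tate_eq m1 m2 m3 m4 m6 t a" "tate_eq m1 m2 m3 m4 m6 t b"
  shows "(a - b) * (1 - m1 * t - m2 * t^2 - m3 * (a + b) - m4 * t * (a + b) - m6 * (a^2 + a*b + b^2)) = 0"
proof -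
  have ea: "a = t ^ 3 + m1 * t * a + m2 * t ^ 2 * a + m3 * a ^ 2 + m4 * t * a ^ 2 + m6 * a ^ 3"
    and eb: "b = t ^ 3 + m1 * t * b + m2 * t ^ 2 * b + m3 * b ^ 2 + m4 * t * b ^ 2 + m6 * b ^ 3"
    using assms unfolding tate_eq_def by auto
  have "a - b = (t ^ 3 + m1 * t * a + m2 * t ^ 2 * a + m3 * a ^ 2 + m4 * t * a ^ 2 + m6 * a ^ 3)
     - (t ^ 3 + m1 * t * b + m2 * t ^ 2 * b + m3 * b ^ 2 + m4 * t * b ^ 2 + m6 * b ^ 3)"
    by (rule arg_cong2[of _ _ _ _ "(-)"]) (rule ea, rule eb)
  then show ?thesis by (simp add: algebra_simps power2_eq_square power3_eq_cube)
qed


locale fglx = wsig +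
  fixes m1 m2 m3 m4 m6 :: complex and s f :: "complex \<Rightarrow> complex" and rs rf :: real
  assumes g2: "g2 = (4 * m2 + m1 ^ 2) ^ 2 / 12 - 2 * (m1 * m3 + 2 * m4)"
    and g3: "g3 = (m1 * m3 + 2 * m4) * (4 * m2 + m1 ^ 2) / 6 - (4 * m2 + m1 ^ 2) ^ 3 / 216
               - 4 * m6 - m3 ^ 2"
    and s_ass: "tate_s m1 m2 m3 m4 m6 rs s"
    and f_ass: "fgl_exponential m1 m2 m3 m4 m6 s rf f"
begin

lemma rs: "rs > 0" and s_hol: "s holomorphic_on ball 0 rs" and s0: "s 0 = 0"
  and s_eq: "\<And>t. t \<in> ball 0 rs \<Longrightarrow> tate_eq m1 m2 m3 m4 m6 t (s t)"
  using s_ass unfolding tate_s_def by auto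

lemma rf: "rf > 0" and f_hol: "f holomorphic_on ball 0 rf" and f0: "f 0 = 0" and df0: "deriv f 0 = 1"
  and f_fe: "\<And>u v. u \<in> ball 0 rf \<Longrightarrow> v \<in> ball 0 rf \<Longrightarrow> u + v \<in> ball 0 rf \<Longrightarrow>
        f (u + v) = elliptic_fgl m1 m2 m3 m4 m6 s (f u) (f v)"
  using f_ass unfolding fgl_exponential_def by auto

lemma s_der: "t \<in> ball 0 rs \<Longrightarrow> (s has_field_derivative deriv s t) (at t)"
  using holomorphic_derivI[OF s_hol open_ball, of t UNIV] by simp

lemma ds0: "deriv s 0 = 0"
proof -
  define B where "B t = 1 - m1 * t - m2 * t^2 - m3 * s t - m4 * t * s t - m6 * (s t)^2" for t
  have sB: "s t * B t = t^3" if "t \<in> ball 0 rs" for t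
    using s_eq[OF that] unfolding tate_eq_def B_def by (simp add: algebra_simps power2_eq_square power3_eq_cube)
  have 0: "(0::complex) \<in> ball 0 rs" using rs by simp
  have "((\<lambda>t. s t * B t) has_field_derivative deriv s 0 * B 0 + s 0 * deriv B 0) (at 0)"
  proof -
    have Bd: "(B has_field_derivative deriv B 0) (at 0)"
    proof -
      have "B holomorphic_on ball 0 rs" unfolding B_def[abs_def] by (intro holomorphic_intros s_hol)
      from holomorphic_derivI[OF this open_ball 0, of UNIV] show ?thesis by simp
    qed
    show ?thesis by (rule DERIV_cong[OF DERIV_mult[OF s_der[OF 0] Bd]]) (simp add: algebra_simps)
  qed
  moreover have "((\<lambda>t. s t * B t) has_field_derivative 3 * 0^2) (at 0)"
  proof -
    have "((\<lambda>t::complex. t^3) has_field_derivative 3 * 0^2) (at 0)" by (auto intro!: derivative_eq_intros)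
    then show ?thesis by (rule has_field_derivative_transform_within_open[OF _ open_ball 0]) (simp add: sB)
  qed
  ultimately have "deriv s 0 * B 0 + s 0 * deriv B 0 = 3 * 0^2" by (rule DERIV_unique)
  moreover have "B 0 = 1" unfolding B_def s0 by simp
  ultimately show ?thesis using s0 by simp
qed

definition "om t = 1 - m1 * t - m2 * t^2 - 2 * m3 * s t - 2 * m4 * t * s t - 3 * m6 * (s t)^2"

lemma om_hol: "om holomorphic_on ball 0 rs"
  unfolding om_def[abs_def] by (intro holomorphic_intros s_hol)

lemma om0: "om 0 = 1" unfolding om_def s0 by simp

lemma s_tendsto: "(s \<longlongrightarrow> 0) (at 0)"
  using hol_tendsto[OF s_hol open_ball, of 0] rs s0 by simp

lemma L_tendsto: "((\<lambda>t. s t / t) \<longlongrightarrow> 0) (at 0)"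
proof -
  have "(s has_field_derivative 0) (at 0)" using s_der[of 0] rs ds0 by simp
  then show ?thesis unfolding has_field_derivative_iff s0 by simp
qed

lemma fgl_deriv:
  "eventually (\<lambda>t. (elliptic_fgl m1 m2 m3 m4 m6 s t has_field_derivative om t) (at 0)) (at 0)"
proof -
  define Lf where "Lf t = s t / t" for t
  define D0f where "D0f t = 1 + m2 * Lf t + m4 * (Lf t)^2 + m6 * (Lf t)^3" for t
  define t30f where "t30f t = -t - (m1 * Lf t + m3 * (Lf t)^2) / D0f t" for t
  define E0f where "E0f t = 1 - m1 * t30f t - m3 * (Lf t * t30f t)" for t
  have Lt: "(Lf \<longlongrightarrow> 0) (at 0)" using L_tendsto unfolding Lf_def[abs_def] .
  have D0t: "(D0f \<longlongrightarrow> 1) (at 0)" unfolding D0f_def[abs_def]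
    by (rule tendsto_eq_intros refl Lt | simp)+
  have t30t: "(t30f \<longlongrightarrow> 0) (at 0)" unfolding t30f_def[abs_def]
    by (rule tendsto_eq_intros refl Lt D0t tendsto_ident_at | simp)+
  have E0t: "(E0f \<longlongrightarrow> 1) (at 0)" unfolding E0f_def[abs_def]
    by (rule tendsto_eq_intros refl Lt t30t | simp)+
  have ev1: "eventually (\<lambda>t. t \<in> ball 0 rs \<and> t \<noteq> 0) (at (0::complex))"
    using rs by (auto simp: eventually_at dist_commute intro!: exI[of _ rs])
  have ev2: "eventually (\<lambda>t. D0f t \<noteq> 0) (at 0)" using D0t by (rule tendsto_imp_eventually_ne) simp
  have ev3: "eventually (\<lambda>t. E0f t \<noteq> 0) (at 0)" using E0t by (rule tendsto_imp_eventually_ne) simp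
  show ?thesis using ev1 ev2 ev3
  proof eventually_elim
    case (elim t)
    then have t: "t \<in> ball 0 rs" "t \<noteq> 0" and D0n: "D0f t \<noteq> 0" and E0n: "E0f t \<noteq> 0" by auto
    define L where "L = s t / t"
    have 0: "(0::complex) \<in> ball 0 rs" using rs by simp
    define lam where "lam x = (s x - s t) / (x - t)" for x
    define nu where "nu x = s t - lam x * t" for x
    define N where "N x = m1 * lam x + m2 * nu x + m3 * (lam x)^2 + 2 * m4 * lam x * nu x + 3 * m6 * (lam x)^2 * nu x" for x
    define Dn where "Dn x = 1 + m2 * lam x + m4 * (lam x)^2 + m6 * (lam x)^3" for x
    define t3 where "t3 x = - t - x - N x / Dn x" for x
    define s3 where "s3 x = lam x * t3 x + nu x" for x
    define F where "F x = - t3 x / (1 - m1 * t3 x - m3 * s3 x)" for x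
    have lam0: "lam 0 = L" unfolding lam_def L_def s0 by simp
    have nu0: "nu 0 = 0" unfolding nu_def lam0 L_def using t(2) by simp
    have dlam: "(lam has_field_derivative L / t) (at 0)"
    proof -
      have d1: "((\<lambda>x. s x - s t) has_field_derivative deriv s 0 - 0) (at 0)"
        by (rule DERIV_diff[OF s_der[OF 0] DERIV_const])
      have d2: "((\<lambda>x. x - t) has_field_derivative 1 - 0) (at 0)" by (rule DERIV_diff[OF DERIV_ident DERIV_const])
      have "(lam has_field_derivative ((deriv s 0 - 0) * (0 - t) - (s 0 - s t) * (1 - 0)) / ((0 - t) * (0 - t))) (at 0)"
        unfolding lam_def[abs_def] using t(2) by (intro DERIV_divide[OF d1 d2]) auto
      then show ?thesis unfolding ds0 s0 L_def using t(2) by (simp add: field_simps power2_eq_square)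
    qed
    have dnu: "(nu has_field_derivative - L) (at 0)"
    proof -
      have "(nu has_field_derivative 0 - L / t * t) (at 0)"
        unfolding nu_def[abs_def] by (intro DERIV_diff DERIV_const DERIV_cmult_right dlam)
      then show ?thesis using t(2) by simp
    qed
    define N1 where "N1 = m1 * (L/t) + m2 * (-L) + 2 * m3 * L * (L/t) + 2 * m4 * L * (-L) + 3 * m6 * L^2 * (-L)"
    define D1 where "D1 = m2 * (L/t) + 2 * m4 * L * (L/t) + 3 * m6 * L^2 * (L/t)"
    define N0 where "N0 = m1 * L + m3 * L^2"
    define D0 where "D0 = 1 + m2 * L + m4 * L^2 + m6 * L^3"
    have N0': "N 0 = N0" unfolding N_def N0_def lam0 nu0 by simp
    have D0': "Dn 0 = D0" unfolding Dn_def D0_def lam0 by simp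
    have dN: "(N has_field_derivative N1) (at 0)"
      unfolding N_def[abs_def] N1_def
      by (rule derivative_eq_intros refl dlam dnu | simp add: lam0 nu0)+ (simp add: algebra_simps power2_eq_square)
    have dD: "(Dn has_field_derivative D1) (at 0)"
      unfolding Dn_def[abs_def] D1_def
      by (rule derivative_eq_intros refl dlam | simp add: lam0)+ (simp add: algebra_simps power2_eq_square)
    have D0n': "D0 \<noteq> 0" using D0n unfolding D0f_def D0_def Lf_def L_def .
    define t30 where "t30 = -t - N0 / D0"
    define t31 where "t31 = -1 - (N1 * D0 - N0 * D1) / (D0 * D0)"
    have t30': "t3 0 = t30" unfolding t3_def t30_def N0' D0' by simp
    have dt3: "(t3 has_field_derivative t31) (at 0)"
    proof -
      have "(t3 has_field_derivative 0 - 1 - (N1 * Dn 0 - N 0 * D1) / (Dn 0 * Dn 0)) (at 0)"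
        unfolding t3_def[abs_def] using D0n' D0'
        by (intro DERIV_diff DERIV_const DERIV_ident DERIV_divide dN dD) auto
      then show ?thesis unfolding t31_def N0' D0' by simp
    qed
    define s31 where "s31 = (L/t) * t30 + L * t31 + (-L)"
    have s30': "s3 0 = L * t30" unfolding s3_def lam0 nu0 t30' by simp
    have ds3: "(s3 has_field_derivative s31) (at 0)"
    proof -
      have "(s3 has_field_derivative lam 0 * t31 + L / t * t3 0 + (-L)) (at 0)"
        unfolding s3_def[abs_def] by (intro DERIV_add DERIV_mult' dlam dt3 dnu)
      then show ?thesis unfolding s31_def lam0 t30' by (simp add: algebra_simps)
    qed
    define E0 where "E0 = 1 - m1 * t30 - m3 * (L * t30)"
    define E1 where "E1 = - m1 * t31 - m3 * s31"
    have E0n': "E0 \<noteq> 0" using E0n unfolding E0f_def E0_def t30f_def t30_def Lf_def L_def N0_def D0f_def D0_def .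
    have dF: "(F has_field_derivative - (t31 * E0 - t30 * E1) / (E0 * E0)) (at 0)"
    proof -
      have dE: "((\<lambda>x. 1 - m1 * t3 x - m3 * s3 x) has_field_derivative 0 - m1 * t31 - m3 * s31) (at 0)"
        by (intro DERIV_diff DERIV_const DERIV_cmult dt3 ds3)
      have E0'': "1 - m1 * t3 0 - m3 * s3 0 = E0" unfolding E0_def t30' s30' by simp
      have E0''': "1 - m1 * t30 - m3 * s3 0 = E0" unfolding E0_def s30' by simp
      have "(F has_field_derivative (- t31 * (1 - m1 * t3 0 - m3 * s3 0) - - t3 0 * (0 - m1 * t31 - m3 * s31))
          / ((1 - m1 * t3 0 - m3 * s3 0) * (1 - m1 * t3 0 - m3 * s3 0))) (at 0)"
        unfolding F_def[abs_def] using E0n' E0''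
        by (intro DERIV_divide DERIV_minus dt3 dE) auto
      then have "(F has_field_derivative (- t31 * E0 - - t30 * (0 - m1 * t31 - m3 * s31)) / (E0 * E0)) (at 0)"
        unfolding t30' E0''' .
      then show ?thesis by (rule DERIV_cong) (simp add: E1_def algebra_simps)
    qed
    have rel: "s t = t ^ 3 + m1 * t * s t + m2 * t ^ 2 * s t + m3 * (s t) ^ 2 + m4 * t * (s t) ^ 2 + m6 * (s t) ^ 3"
      using s_eq[OF t(1)] unfolding tate_eq_def by simp
    have val: "- (t31 * E0 - t30 * E1) / (E0 * E0) = om t"
      unfolding om_def
      by (rule alg_fgl_full[OF rel t(2) D0n' E0n' L_def N0_def N1_def D0_def D1_def t30_def t31_def
            s31_def E0_def E1_def])
    have dF': "(F has_field_derivative om t) (at 0)" using dF val by simp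
    have "\<forall>\<^sub>F x in nhds 0. F x = elliptic_fgl m1 m2 m3 m4 m6 s t x"
    proof -
      have "eventually (\<lambda>x. x \<in> - {t}) (nhds (0::complex))"
        by (rule eventually_nhds_in_open) (use t(2) in \<open>auto simp: open_Compl\<close>)
      then have "eventually (\<lambda>x. x \<noteq> t) (nhds (0::complex))" by eventually_elim simp
      then show ?thesis
      proof eventually_elim
        case (elim x)
        then show ?case unfolding F_def elliptic_fgl_def chord_slope_def s3_def t3_def N_def Dn_def
            nu_def lam_def Let_def using elim by auto
      qed
    qed
    then show ?case using dF' by (subst (asm) DERIV_cong_ev[OF refl _ refl]) auto
  qed
qed

lemma f_der: "u \<in> ball 0 rf \<Longrightarrow> (f has_field_derivative deriv f u) (at u)"
  using holomorphic_derivI[OF f_hol open_ball, of u UNIV] by simp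

lemma f_tendsto: "(f \<longlongrightarrow> 0) (at 0)"
  using hol_tendsto[OF f_hol open_ball, of 0] rf f0 by simp

lemma f_nz: "eventually (\<lambda>u. f u \<noteq> 0) (at 0)"
proof -
  have "(f has_field_derivative 1) (at 0)" using f_der[of 0] rf df0 by simp
  then have "((\<lambda>y. f y / y) \<longlongrightarrow> 1) (at 0)" unfolding has_field_derivative_iff f0 by simp
  then have "eventually (\<lambda>y. f y / y \<noteq> 0) (at 0)" by (rule tendsto_imp_eventually_ne) simp
  then show ?thesis by eventually_elim auto
qed

lemma f_filterlim: "filterlim f (at 0) (at 0)"
  by (rule filterlim_atI[OF f_tendsto f_nz])

lemma f_ode: "eventually (\<lambda>u. (f has_field_derivative om (f u)) (at u)) (at 0)"
proof -
  have evD: "eventually (\<lambda>u. (elliptic_fgl m1 m2 m3 m4 m6 s (f u) has_field_derivative om (f u)) (at 0)) (at 0)"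
    by (rule eventually_compose_filterlim[OF fgl_deriv f_filterlim])
  have evB: "eventually (\<lambda>u. u \<in> ball 0 rf) (at (0::complex))"
    using rf by (auto simp: eventually_at dist_commute intro!: exI[of _ rf])
  show ?thesis using evD evB
  proof eventually_elim
    case (elim u)
    then have dE: "(elliptic_fgl m1 m2 m3 m4 m6 s (f u) has_field_derivative om (f u)) (at (f 0))"
      and u: "u \<in> ball 0 rf" by (auto simp: f0)
    have fd0: "(f has_field_derivative 1) (at 0)" using f_der[of 0] rf df0 by simp
    have r1: "((\<lambda>h. elliptic_fgl m1 m2 m3 m4 m6 s (f u) (f h)) has_field_derivative om (f u) * 1) (at 0)"
      by (rule DERIV_chain2[OF dE fd0])
    have r2: "((\<lambda>h. f (u + h)) has_field_derivative deriv f u) (at 0)"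
    proof -
      have "((\<lambda>h. u + h) has_field_derivative 1) (at 0)" by (auto intro!: derivative_eq_intros)
      from DERIV_chain2[OF f_der[of "u + 0"] this] u show ?thesis by simp
    qed
    have ev: "eventually (\<lambda>h. f (u + h) = elliptic_fgl m1 m2 m3 m4 m6 s (f u) (f h)) (nhds 0)"
    proof -
      have op: "open (ball 0 rf \<inter> (\<lambda>h. u + h) -` ball 0 rf)"
        by (intro open_Int open_ball continuous_open_vimage) (auto intro!: continuous_intros)
      have "eventually (\<lambda>h. h \<in> ball 0 rf \<inter> (\<lambda>h. u + h) -` ball 0 rf) (nhds 0)"
        by (rule eventually_nhds_in_open[OF op]) (use rf u in auto)
      then show ?thesis by eventually_elim (use u f_fe in auto)
    qed
    have "((\<lambda>h. f (u + h)) has_field_derivative om (f u) * 1) (at 0)"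
      using r1 by (subst DERIV_cong_ev[OF refl ev refl])
    then have "deriv f u = om (f u)" using DERIV_unique[OF r2] by simp
    then show ?case using f_der[OF u] by simp
  qed
qed

definition "cc = (4 * m2 + m1 ^ 2) / 12"
definition "Xw u = P u - cc"
definition "Yw u = (P' u - m1 * Xw u - m3) / 2"
definition "ft u = (if u = 0 then 0 else - Xw u / Yw u)"
definition "st u = - 1 / Yw u"

lemma ft_basic:
  "eventually (\<lambda>u. u \<in> S \<and> u \<noteq> 0 \<and> Yw u \<noteq> 0) (at 0)" "(ft \<longlongrightarrow> 0) (at 0)" "(st \<longlongrightarrow> 0) (at 0)"
proof -
  obtain r k m n where r: "r > 0" "m holomorphic_on ball 0 r"
    "n holomorphic_on ball 0 r"
    "\<And>u. u \<in> ball 0 r \<Longrightarrow> u \<noteq> 0 \<Longrightarrow> u \<in> S"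
    "\<And>u. u \<in> ball 0 r \<Longrightarrow> u \<noteq> 0 \<Longrightarrow> P u = 1/u^2 + u^2 * m u"
    "\<And>u. u \<in> ball 0 r \<Longrightarrow> u \<noteq> 0 \<Longrightarrow> P' u = -2/u^3 + u * n u"
    by (rule local_exp) blast
  have m0: "(m \<longlongrightarrow> m 0) (at 0)" by (rule hol_tendsto[OF r(2) open_ball]) (use r in simp)
  have n0: "(n \<longlongrightarrow> n 0) (at 0)" by (rule hol_tendsto[OF r(3) open_ball]) (use r in simp)
  define xa where "xa u = 1 - cc * u^2 + u^4 * m u" for u
  define yb where "yb u = (-2 + u^4 * n u - m1 * u * xa u - m3 * u^3) / 2" for u
  have xa0: "(xa \<longlongrightarrow> 1) (at 0)" unfolding xa_def[abs_def]
    by (rule tendsto_eq_intros refl m0 tendsto_ident_at | simp)+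
  have yb0: "(yb \<longlongrightarrow> -1) (at 0)" unfolding yb_def[abs_def]
    by (rule tendsto_eq_intros refl n0 xa0 tendsto_ident_at | simp)+
  have ev1: "eventually (\<lambda>u. u \<in> ball 0 r \<and> u \<noteq> 0) (at (0::complex))"
    using r(1) by (auto simp: eventually_at dist_commute intro!: exI[of _ r])
  have ev2: "eventually (\<lambda>u. yb u \<noteq> 0) (at 0)" using yb0 by (rule tendsto_imp_eventually_ne) simp
  have ev: "eventually (\<lambda>u. u \<in> S \<and> u \<noteq> 0 \<and> Yw u \<noteq> 0 \<and> ft u = - u * xa u / yb u \<and> st u = -(u^3) / yb u) (at 0)"
    using ev1 ev2
  proof eventually_elim
    case (elim u)
    then have u: "u \<in> ball 0 r" "u \<noteq> 0" "yb u \<noteq> 0" by auto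
    have X: "Xw u = xa u / u^2" unfolding Xw_def xa_def r(5)[OF u(1,2)] using u(2)
      by (simp add: field_simps power_numeral_reduce)
    have Y: "Yw u = yb u / u^3" unfolding Yw_def yb_def X r(6)[OF u(1,2)] using u(2)
      by (simp add: field_simps power_numeral_reduce)
    have Yn: "Yw u \<noteq> 0" using Y u by simp
    have "ft u = - u * xa u / yb u" unfolding ft_def X Y using u by (simp add: field_simps power_numeral_reduce)
    moreover have "st u = -(u^3) / yb u" unfolding st_def Y using u by (simp add: field_simps)
    ultimately show ?case using r(4)[OF u(1,2)] u(2) Yn by simp
  qed
  then show "eventually (\<lambda>u. u \<in> S \<and> u \<noteq> 0 \<and> Yw u \<noteq> 0) (at 0)" by eventually_elim simp
  have "((\<lambda>u. - u * xa u / yb u) \<longlongrightarrow> 0) (at 0)"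
    by (rule tendsto_eq_intros refl xa0 yb0 tendsto_ident_at | simp)+
  then show "(ft \<longlongrightarrow> 0) (at 0)" by (rule Lim_transform_eventually) (use ev in \<open>eventually_elim, simp\<close>)
  have "((\<lambda>u. -(u^3) / yb u) \<longlongrightarrow> 0) (at 0)"
    by (rule tendsto_eq_intros refl yb0 tendsto_ident_at | simp)+
  then show "(st \<longlongrightarrow> 0) (at 0)" by (rule Lim_transform_eventually) (use ev in \<open>eventually_elim, simp\<close>)
qed

lemma ft_tate: assumes "u \<in> S" "u \<noteq> 0" "Yw u \<noteq> 0" shows "tate_eq m1 m2 m3 m4 m6 (ft u) (st u)"
proof -
  have c: "(Yw u)^2 + m1 * Xw u * Yw u + m3 * Yw u = (Xw u)^3 + m2 * (Xw u)^2 + m4 * Xw u + m6"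
    by (rule alg_tate[OF g2 g3 ode[OF assms(1)]]) (simp_all add: Xw_def Yw_def cc_def)
  show ?thesis unfolding ft_def st_def using alg_tate2[OF c assms(3)] assms(2) by simp
qed

lemma s_ft: "eventually (\<lambda>u. s (ft u) = st u) (at 0)"
proof -
  have sft: "((\<lambda>u. s (ft u)) \<longlongrightarrow> 0) (at 0)"
  proof -
    have "isCont s 0" using hol_tendsto[OF s_hol open_ball, of 0] rs by (simp add: isCont_def)
    from isCont_tendsto_compose[OF this ft_basic(2)] show ?thesis using s0 by simp
  qed
  define Br where "Br u = 1 - m1 * ft u - m2 * (ft u)^2 - m3 * (st u + s (ft u)) - m4 * ft u * (st u + s (ft u))
     - m6 * ((st u)^2 + st u * s (ft u) + (s (ft u))^2)" for u
  have "(Br \<longlongrightarrow> 1) (at 0)" unfolding Br_def[abs_def]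
    by (rule tendsto_eq_intros refl ft_basic(2) ft_basic(3) sft | simp)+
  then have ev1: "eventually (\<lambda>u. Br u \<noteq> 0) (at 0)" by (rule tendsto_imp_eventually_ne) simp
  have ev2: "eventually (\<lambda>u. ft u \<in> ball 0 rs) (at 0)"
    using ft_basic(2) open_ball by (rule topological_tendstoD) (use rs in simp)
  show ?thesis using ev1 ev2 ft_basic(1)
  proof eventually_elim
    case (elim u)
    have "(st u - s (ft u)) * Br u = 0"
      unfolding Br_def by (rule alg_uniq[OF ft_tate s_eq]) (use elim in auto)
    then show ?case using elim by simp
  qed
qed

lemma ft_ode: "eventually (\<lambda>u. (ft has_field_derivative om (ft u)) (at u)) (at 0)"
  using ft_basic(1) s_ft
proof eventually_elim
  case (elim u)
  then have u: "u \<in> S" "u \<noteq> 0" "Yw u \<noteq> 0" and su: "s (ft u) = st u" by auto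
  have dX: "(Xw has_field_derivative P' u) (at u)"
    unfolding Xw_def[abs_def] by (rule DERIV_cong[OF DERIV_diff[OF P_der[OF u(1)] DERIV_const]]) simp
  have dY: "(Yw has_field_derivative (P'' u - m1 * P' u) / 2) (at u)"
    unfolding Yw_def[abs_def]
    by (rule DERIV_cong[OF DERIV_cdivide[OF DERIV_diff[OF DERIV_diff[OF P'_der[OF u(1)] DERIV_cmult[OF dX]] DERIV_const]]]) simp
  have d1: "((\<lambda>x. - Xw x / Yw x) has_field_derivative (- P' u * Yw u - - Xw u * ((P'' u - m1 * P' u) / 2)) / (Yw u * Yw u)) (at u)"
    by (rule DERIV_divide[OF DERIV_minus[OF dX] dY u(3)])
  have val: "(- P' u * Yw u - - Xw u * ((P'' u - m1 * P' u) / 2)) / (Yw u * Yw u) = om (ft u)"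
  proof -
    have num: "- P' u * Yw u - - Xw u * ((P'' u - m1 * P' u) / 2) = - (P' u * Yw u - Xw u * ((P'' u - m1 * P' u) / 2))"
    proof -
      have gen: "\<And>a y x b::complex. - a * y - - x * b = - (a * y - x * b)" by (simp add: algebra_simps)
      show ?thesis by (rule gen)
    qed
    have A: "(- P' u * Yw u - - Xw u * ((P'' u - m1 * P' u) / 2)) / (Yw u * Yw u)
       = - (P' u * Yw u - Xw u * ((P'' u - m1 * P' u) / 2)) / (Yw u)^2"
      by (simp only: num power2_eq_square)
    have ftu: "ft u = - Xw u / Yw u" unfolding ft_def using u by simp
    show ?thesis unfolding A om_def su unfolding st_def ftu
      by (rule alg_ft[OF g2 g3 ode[OF u(1)] P''_eq[OF u(1)] _ _ u(3)]) (simp_all add: Xw_def Yw_def cc_def)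
  qed
  have ev: "eventually (\<lambda>x. - Xw x / Yw x = ft x) (nhds u)"
  proof -
    have "eventually (\<lambda>x. x \<in> - {0}) (nhds u)"
      by (rule eventually_nhds_in_open) (use u(2) in \<open>auto simp: open_Compl\<close>)
    then show ?thesis by eventually_elim (simp add: ft_def)
  qed
  show ?case using d1 val by (subst (asm) DERIV_cong_ev[OF refl ev refl]) simp
qed

lemma om_near:
  obtains \<rho> where "\<rho> > 0" "\<rho> \<le> rs" "\<And>z. z \<in> ball 0 \<rho> \<Longrightarrow> cmod (om z - 1) < 1/3"
proof -
  have "(om \<longlongrightarrow> 1) (at 0)" using hol_tendsto[OF om_hol open_ball, of 0] rs om0 by simp
  then have "eventually (\<lambda>z. om z \<in> ball 1 (1/3)) (at 0)"
    by (rule topological_tendstoD) auto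
  then obtain d where d: "d > 0" "\<And>z. z \<noteq> 0 \<Longrightarrow> dist z 0 < d \<Longrightarrow> om z \<in> ball 1 (1/3)"
    unfolding eventually_at by auto
  show ?thesis
  proof (rule that[of "min d rs"])
    show "min d rs > 0" using d rs by simp
    show "min d rs \<le> rs" by simp
    fix z :: complex assume z: "z \<in> ball 0 (min d rs)"
    show "cmod (om z - 1) < 1/3"
    proof (cases "z = 0")
      case True then show ?thesis by (simp add: om0)
    next
      case False
      then have "om z \<in> ball 1 (1/3)" using d(2)[of z] z by (simp add: dist_commute)
      then show ?thesis by (simp add: dist_norm norm_minus_commute)
    qed
  qed
qed

lemma f_eq_ft: "eventually (\<lambda>u. f u = ft u) (at 0)"
proof -
  obtain \<rho> where \<rho>: "\<rho> > 0" "\<rho> \<le> rs" "\<And>z. z \<in> ball 0 \<rho> \<Longrightarrow> cmod (om z - 1) < 1/3"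
    by (rule om_near) blast
  have omn: "om z \<noteq> 0" if "z \<in> ball 0 \<rho>" for z
  proof
    assume "om z = 0" then show False using \<rho>(3)[OF that] by simp
  qed
  have omb: "cmod (om z) \<ge> 2/3" if "z \<in> ball 0 \<rho>" for z
  proof -
    have "cmod (1::complex) \<le> cmod (om z) + cmod (1 - om z)" by (rule norm_triangle_sub)
    then show ?thesis using \<rho>(3)[OF that] by (simp add: norm_minus_commute)
  qed
  have homr: "om holomorphic_on ball 0 \<rho>" by (rule holomorphic_on_subset[OF om_hol]) (use \<rho> in auto)
  have hinv: "(\<lambda>z. 1 / om z) holomorphic_on ball 0 \<rho>" by (intro holomorphic_intros homr omn)
  obtain Wf where Wf: "\<And>x. x \<in> ball 0 \<rho> \<Longrightarrow> (Wf has_field_derivative 1 / om x) (at x within ball 0 \<rho>)"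
    using holomorphic_convex_primitive'[OF convex_ball open_ball hinv] by blast
  have Wd: "(Wf has_field_derivative 1 / om x) (at x)" if "x \<in> ball 0 \<rho>" for x
    using Wf[OF that] at_within_open[OF that open_ball] by simp
  have Winj: "a = b" if ab: "a \<in> ball 0 \<rho>" "b \<in> ball 0 \<rho>" "Wf a = Wf b" for a b
  proof -
    have "cmod ((Wf a - a) - (Wf b - b)) \<le> 1/2 * cmod (a - b)"
    proof (rule field_differentiable_bound[OF convex_ball])
      fix z :: complex assume z: "z \<in> ball 0 \<rho>"
      show "((\<lambda>z. Wf z - z) has_field_derivative 1 / om z - 1) (at z within ball 0 \<rho>)"
        by (intro DERIV_diff Wf[OF z] DERIV_ident)
      have "cmod (1 / om z - 1) = cmod (1 - om z) / cmod (om z)"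
        using omn[OF z] by (simp add: field_simps norm_divide)
      also have "\<dots> \<le> (1/3) / (2/3)"
        using \<rho>(3)[OF z] omb[OF z] by (intro frac_le) (auto simp: norm_minus_commute)
      finally show "cmod (1 / om z - 1) \<le> 1/2" by simp
    qed (use ab in auto)
    then have "cmod (a - b) \<le> 1/2 * cmod (a - b)" using ab(3) by (simp add: norm_minus_commute)
    then show ?thesis by simp
  qed
  have Wc: "isCont Wf x" if "x \<in> ball 0 \<rho>" for x using Wd[OF that] by (rule DERIV_isCont)
  have ev_fb: "eventually (\<lambda>u. f u \<in> ball 0 \<rho>) (at 0)"
    using f_tendsto open_ball by (rule topological_tendstoD) (use \<rho> in simp)
  have ev_ftb: "eventually (\<lambda>u. ft u \<in> ball 0 \<rho>) (at 0)"
    using ft_basic(2) open_ball by (rule topological_tendstoD) (use \<rho> in simp)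
  have evB: "eventually (\<lambda>u. u \<in> ball 0 rf) (at (0::complex))"
    using rf by (auto simp: eventually_at dist_commute intro!: exI[of _ rf])
  have "eventually (\<lambda>u. f u \<in> ball 0 \<rho> \<and> ft u \<in> ball 0 \<rho> \<and> u \<in> ball 0 rf \<and>
      (f has_field_derivative om (f u)) (at u) \<and> (ft has_field_derivative om (ft u)) (at u)) (at 0)"
    using ev_fb ev_ftb evB f_ode ft_ode by eventually_elim auto
  then obtain d where d: "d > 0" and dQ: "\<And>u. u \<noteq> 0 \<Longrightarrow> dist u 0 < d \<Longrightarrow> f u \<in> ball 0 \<rho> \<and> ft u \<in> ball 0 \<rho> \<and> u \<in> ball 0 rf \<and>
      (f has_field_derivative om (f u)) (at u) \<and> (ft has_field_derivative om (ft u)) (at u)"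
    unfolding eventually_at by auto
  have 0: "(0::complex) \<in> ball 0 \<rho>" using \<rho> by simp
  have const: "Wf (g u) - u = Wf 0" if g0: "g 0 = 0" and gc0: "isCont g 0" and
      gd: "\<And>u. u \<noteq> 0 \<Longrightarrow> dist u 0 < d \<Longrightarrow> g u \<in> ball 0 \<rho> \<and> (g has_field_derivative om (g u)) (at u)"
      and u: "u \<in> ball 0 d" for g u
  proof -
    have cont: "continuous_on (ball 0 d) (\<lambda>u. Wf (g u) - u)"
    proof (rule continuous_at_imp_continuous_on, rule ballI)
      fix x :: complex assume x: "x \<in> ball 0 d"
      show "isCont (\<lambda>u. Wf (g u) - u) x"
      proof (cases "x = 0")
        case True
        then show ?thesis using isCont_o2[OF gc0 Wc[of "g 0"]] 0 g0 by (auto intro!: continuous_intros)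
      next
        case False
        then have gx: "g x \<in> ball 0 \<rho>" "(g has_field_derivative om (g x)) (at x)"
          using gd[of x] x by (auto simp: dist_commute)
        show ?thesis using isCont_o2[OF DERIV_isCont[OF gx(2)] Wc[OF gx(1)]] by (auto intro!: continuous_intros)
      qed
    qed
    have der: "\<forall>x\<in>ball 0 d - {0}. ((\<lambda>u. Wf (g u) - u) has_field_derivative 0) (at x)"
    proof
      fix x :: complex assume x: "x \<in> ball 0 d - {0}"
      then have gx: "g x \<in> ball 0 \<rho>" "(g has_field_derivative om (g x)) (at x)"
        using gd[of x] by (auto simp: dist_commute)
      have "((\<lambda>u. Wf (g u) - u) has_field_derivative 1 / om (g x) * om (g x) - 1) (at x)"
        by (intro DERIV_diff DERIV_chain2[OF Wd[OF gx(1)] gx(2)] DERIV_ident)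
      then show "((\<lambda>u. Wf (g u) - u) has_field_derivative 0) (at x)" using omn[OF gx(1)] by simp
    qed
    obtain c where c: "\<And>x. x \<in> ball 0 d \<Longrightarrow> Wf (g x) - x = c"
      using DERIV_zero_connected_constant[OF connected_ball open_ball finite.insertI[OF finite.emptyI] cont der] by blast
    have "c = Wf 0" using c[of 0] d g0 by simp
    then show ?thesis using c[OF u] by simp
  qed
  have fc0: "isCont f 0" using f_tendsto f0 by (simp add: isCont_def)
  have ftc0: "isCont ft 0" using ft_basic(2) by (simp add: isCont_def ft_def)
  have ft0: "ft 0 = 0" by (simp add: ft_def)
  have "eventually (\<lambda>u. u \<in> ball 0 d) (at (0::complex))"
    using d by (auto simp: eventually_at dist_commute intro!: exI[of _ d])
  then show ?thesis
  proof eventually_elim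
    case (elim u)
    have e1: "Wf (f u) - u = Wf 0" by (rule const[OF f0 fc0 _ elim]) (use dQ in blast)
    have e2: "Wf (ft u) - u = Wf 0" by (rule const[OF ft0 ftc0 _ elim]) (use dQ in blast)
    show ?case
    proof (cases "u = 0")
      case True then show ?thesis by (simp add: f0 ft0)
    next
      case False
      then have "f u \<in> ball 0 \<rho>" "ft u \<in> ball 0 \<rho>" using dQ[of u] elim by (auto simp: dist_commute)
      moreover have "Wf (f u) - u = Wf (ft u) - u" using e1 e2 by simp
      then have "Wf (f u) = Wf (ft u)" by simp
      ultimately show ?thesis using Winj by blast
    qed
  qed
qed

end


lemma logd_mult:
  fixes a b :: "complex \<Rightarrow> complex"
  assumes "(a has_field_derivative a x * la) (at x)" "(b has_field_derivative b x * lb) (at x)"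
  shows "((\<lambda>x. a x * b x) has_field_derivative a x * b x * (la + lb)) (at x)"
  using DERIV_mult[OF assms] by (simp add: algebra_simps)

lemma alg_K:
  fixes zu zv zvm zvp pu pv qu qv qw m1 m3 fu al :: complex
  assumes zvp: "zvp = zv + zu + (qv - qu) / (pv - pu) / 2"
    and zvm: "zvm = zv + - zu + (qv - - qu) / (pv - pu) / 2"
    and ne: "pv \<noteq> pu" and al: "al = qw / qv" and qv: "qv \<noteq> 0" and m3: "m3 = - qw"
    and fu: "fu = - (pu - pv) / ((qu - m1 * (pu - pv) - m3) / 2)" and fn: "fu \<noteq> 0"
  shows "1 / fu = m1 / 2 + zu + (1 + al) / 2 * zvm - (1 - al) / 2 * zvp - al * zv"
proof -
  have d: "pv - pu \<noteq> 0" using ne by simp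
  have Yn: "(qu - m1 * (pu - pv) - m3) / 2 \<noteq> 0" using fn fu by auto
  have "1 / fu = m1 / 2 + (qu + al * qv) / (2 * (pv - pu))"
    unfolding fu m3 al using d qv Yn by (simp add: field_simps)
  also have "\<dots> = m1 / 2 + zu + (1 + al) / 2 * zvm - (1 - al) / 2 * zvp - al * zv"
  proof -
    define E where "E = 1 / (pv - pu)"
    have e1: "(qv - qu) / (pv - pu) / 2 = (qv - qu) * E / 2" "(qv - - qu) / (pv - pu) / 2 = (qv + qu) * E / 2"
      "(qu + al * qv) / (2 * (pv - pu)) = (qu + al * qv) * E / 2" unfolding E_def by simp_all
    show ?thesis unfolding zvp zvm e1 by (simp add: field_simps)
  qed
  finally show ?thesis .
qed

context wsig begin
lemma ev_add_S: "c \<in> S \<Longrightarrow> eventually (\<lambda>u. c + u \<in> S) (at 0)"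
proof -
  assume c: "c \<in> S"
  have "((\<lambda>u. c + u) \<longlongrightarrow> c) (at (0::complex))" by (auto intro!: tendsto_eq_intros)
  then show ?thesis using openS c by (rule topological_tendstoD)
qed
end

locale mainloc = fglx +
  fixes v w :: complex and \<Psi> :: "complex \<Rightarrow> complex" and rp :: real
  assumes v_reg: "\<sigma> v \<noteq> 0"
    and v_val: "wp \<sigma> v = (4 * m2 + m1 ^ 2) / 12"
    and v_der: "deriv (wp \<sigma>) v \<noteq> 0"
    and w_reg: "\<sigma> w \<noteq> 0"
    and w_der: "deriv (wp \<sigma>) w = - m3"
    and rp: "rp > 0"
    and Psi_ode: "\<forall>u \<in> ball 0 rp - {0}. (\<Psi> has_field_derivative (- \<Psi> u / f u)) (at u)"
    and Psi_lim: "\<exists>L. ((\<lambda>u. \<Psi> u - 1 / u) \<longlongrightarrow> L) (at 0)"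
begin

definition "al = P' w / P' v"
definition "be = (1 - al) / 2"
definition "Kf u = m1 / 2 + Z u + (1 + al) / 2 * Z (v - u) - (1 - al) / 2 * Z (v + u) - al * Z v"

lemma vS: "v \<in> S" using v_reg by (simp add: S_def)

lemma K_eq: "eventually (\<lambda>u. u \<in> S \<and> u \<noteq> 0 \<and> v - u \<in> S \<and> v + u \<in> S \<and> f u \<noteq> 0 \<and> 1 / f u = Kf u) (at 0)"
  using ft_basic(1) f_eq_ft f_nz ev_sub_S[OF vS] ev_add_S[OF vS]
proof eventually_elim
  case (elim u)
  then have u: "u \<in> S" "u \<noteq> 0" "Yw u \<noteq> 0" "f u = ft u" "f u \<noteq> 0" "v - u \<in> S" "v + u \<in> S" by auto
  have ftu: "ft u = - Xw u / Yw u" unfolding ft_def using u by simp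
  have cc: "cc = P v" unfolding cc_def v_val ..
  have Xn: "Xw u \<noteq> 0" using u(4,5) ftu by auto
  have ne: "P v \<noteq> P u" using Xn unfolding Xw_def cc by auto
  have zp: "Z (v + u) = Z v + Z u + (P' v - P' u) / (P v - P u) / 2"
    by (rule zeta_add[OF vS u(1) u(7) ne])
  have zm: "Z (v + - u) = Z v + Z (- u) + (P' v - P' (- u)) / (P v - P (- u)) / 2"
    by (rule zeta_add[OF vS S_neg[OF u(1)]]) (use u(6) ne P_even[OF u(1)] in auto)
  have zm': "Z (v - u) = Z v + - Z u + (P' v - - P' u) / (P v - P u) / 2"
    using zm unfolding Z_odd P_even[OF u(1)] P'_odd[OF u(1)] by simp
  have fu: "f u = - (P u - P v) / ((P' u - m1 * (P u - P v) - m3) / 2)"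
    unfolding u(4) ftu Xw_def Yw_def cc ..
  have "1 / f u = Kf u" unfolding Kf_def
    by (rule alg_K[OF zp zm' ne al_def v_der _ fu u(5)]) (simp add: w_der)
  then show ?case using u by simp
qed

definition "rho u = \<sigma> (v - u) / \<sigma> (v + u) * exp (2 * Z v * u)"
definition "F2 u = \<sigma> v / \<sigma> (v - u)"
definition "F3 u = exp (- Z v * u)"
definition "F4 u = exp (m1 / 2 * u)"
definition "F5 u = exp (be * Ln (rho u))"
definition "Hf u = F2 u * F3 u * F4 u * F5 u"
definition "G u = inverse (wPhi \<sigma> u v) * exp (m1 / 2 * u) * (wPhi \<sigma> u v / wPhi \<sigma> u (- v)) powr ((1 - P' w / P' v) / 2)"

lemma sig_isCont: "isCont \<sigma> x"
  using holomorphic_on_imp_continuous_on[OF hol[of UNIV]] continuous_on_eq_continuous_at[OF open_UNIV] by blast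

lemma sig_der: "(\<sigma> has_field_derivative deriv \<sigma> x) (at x)"
  using holomorphic_derivI[OF hol open_UNIV, of x UNIV] by simp

lemma rho_tendsto: "(rho \<longlongrightarrow> 1) (at 0)"
proof -
  have a: "((\<lambda>u. \<sigma> (v - u)) \<longlongrightarrow> \<sigma> v) (at 0)"
    by (rule comp_sub_tendsto) (use sig_isCont in \<open>simp add: isCont_def\<close>)
  have b: "((\<lambda>u. \<sigma> (v + u)) \<longlongrightarrow> \<sigma> v) (at 0)"
  proof -
    have "((\<lambda>u. v + u) \<longlongrightarrow> v) (at (0::complex))" by (auto intro!: tendsto_eq_intros)
    from isCont_tendsto_compose[OF sig_isCont this] show ?thesis .
  qed
  have "(rho \<longlongrightarrow> \<sigma> v / \<sigma> v * exp (2 * Z v * 0)) (at 0)" unfolding rho_def[abs_def]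
    by (rule tendsto_intros a b tendsto_ident_at | use v_reg in simp)+
  then show ?thesis using v_reg by simp
qed

lemma ev_rho: "eventually (\<lambda>u. Re (rho u) > 0) (at 0)"
proof -
  have "((\<lambda>u. Re (rho u)) \<longlongrightarrow> Re 1) (at 0)" by (rule tendsto_Re[OF rho_tendsto])
  then show ?thesis by (rule order_tendstoD) simp
qed

lemma not_nonpos: "Re z > 0 \<Longrightarrow> z \<notin> \<real>\<^sub>\<le>\<^sub>0"
  by (auto simp: complex_nonpos_Reals_iff)

lemma G_eq:
  assumes u: "u \<in> S" "v - u \<in> S" "v + u \<in> S" "Re (rho u) > 0"
  shows "G u = \<sigma> u * Hf u"
proof -
  have su: "\<sigma> u \<noteq> 0" "\<sigma> (v - u) \<noteq> 0" "\<sigma> (v + u) \<noteq> 0" using u unfolding S_def by auto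
  have sv: "\<sigma> v \<noteq> 0" by (rule v_reg)
  define e where "e = exp (Z v * u)"
  have en: "e \<noteq> 0" unfolding e_def by simp
  have e1: "exp (- Z v * u) = 1 / e" unfolding e_def by (simp add: exp_minus field_simps)
  have e2: "exp (2 * Z v * u) = e * e" unfolding e_def by (simp add: exp_add[symmetric] algebra_simps)
  have m: "\<sigma> (- v - u) = - \<sigma> (v + u)"
  proof -
    have "- v - u = - (v + u)" by simp
    then show ?thesis using odd[of "v + u"] by simp
  qed
  have R: "wPhi \<sigma> u v / wPhi \<sigma> u (- v) = rho u"
    unfolding wPhi_def rho_def m odd[of v] Z_odd e2 e1 e_def[symmetric]
    using su sv en by (simp add: field_simps)
  have rn: "rho u \<noteq> 0" using u(4) by auto
  have pw: "rho u powr ((1 - P' w / P' v) / 2) = F5 u"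
    unfolding F5_def be_def al_def powr_def using rn by simp
  have I: "inverse (wPhi \<sigma> u v) = \<sigma> u * F2 u * F3 u"
    unfolding wPhi_def F2_def F3_def e1 e_def[symmetric] using su sv en by (simp add: field_simps)
  show ?thesis unfolding G_def R pw I Hf_def F4_def by (simp add: algebra_simps)
qed

lemma Hd:
  assumes u: "u \<in> S" "v - u \<in> S" "v + u \<in> S" "Re (rho u) > 0"
  shows "((\<lambda>x. \<sigma> x * Hf x) has_field_derivative \<sigma> u * Hf u * Kf u) (at u)"
proof -
  have su: "\<sigma> u \<noteq> 0" "\<sigma> (v - u) \<noteq> 0" "\<sigma> (v + u) \<noteq> 0" using u unfolding S_def by auto
  have sv: "\<sigma> v \<noteq> 0" by (rule v_reg)
  have d1: "(\<sigma> has_field_derivative \<sigma> u * Z u) (at u)"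
    using sig_der[of u] su by (simp add: wzeta_def)
  have d2: "(F2 has_field_derivative F2 u * Z (v - u)) (at u)"
  proof -
    have "(F2 has_field_derivative (0 * \<sigma> (v - u) - \<sigma> v * (- deriv \<sigma> (v - u))) / (\<sigma> (v - u) * \<sigma> (v - u))) (at u)"
      unfolding F2_def[abs_def] by (intro DERIV_divide DERIV_const chain_sub sig_der su)
    then show ?thesis by (rule DERIV_cong) (use su in \<open>simp add: F2_def wzeta_def field_simps\<close>)
  qed
  have d3: "(F3 has_field_derivative F3 u * (- Z v)) (at u)"
    unfolding F3_def[abs_def] by (rule DERIV_cong, (rule derivative_eq_intros refl)+) simp
  have d4: "(F4 has_field_derivative F4 u * (m1 / 2)) (at u)"
    unfolding F4_def[abs_def] by (rule DERIV_cong, (rule derivative_eq_intros refl)+) simp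
  define lr where "lr = - Z (v - u) - Z (v + u) + 2 * Z v"
  have drho: "(rho has_field_derivative rho u * lr) (at u)"
  proof -
    have q: "((\<lambda>x. \<sigma> (v - x) / \<sigma> (v + x)) has_field_derivative
        (- deriv \<sigma> (v - u) * \<sigma> (v + u) - \<sigma> (v - u) * deriv \<sigma> (v + u)) / (\<sigma> (v + u) * \<sigma> (v + u))) (at u)"
    proof -
      have dp: "((\<lambda>x. \<sigma> (v + x)) has_field_derivative deriv \<sigma> (v + u) * 1) (at u)"
        by (rule DERIV_chain2[OF sig_der]) (auto intro!: derivative_eq_intros)
      show ?thesis using DERIV_divide[OF chain_sub[OF sig_der] dp su(3)] by simp
    qed
    have q': "((\<lambda>x. \<sigma> (v - x) / \<sigma> (v + x)) has_field_derivative
        \<sigma> (v - u) / \<sigma> (v + u) * (- Z (v - u) - Z (v + u))) (at u)"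
      using q by (rule DERIV_cong) (use su in \<open>simp add: wzeta_def field_simps\<close>)
    have e: "((\<lambda>x. exp (2 * Z v * x)) has_field_derivative exp (2 * Z v * u) * (2 * Z v)) (at u)"
      by (rule DERIV_cong, (rule derivative_eq_intros refl)+) simp
    show ?thesis unfolding rho_def[abs_def] lr_def
      using logd_mult[OF q' e] by (simp add: algebra_simps)
  qed
  have rn: "rho u \<notin> \<real>\<^sub>\<le>\<^sub>0" by (rule not_nonpos[OF u(4)])
  have rn0: "rho u \<noteq> 0" using u(4) by auto
  have dln: "((\<lambda>x. Ln (rho x)) has_field_derivative lr) (at u)"
    using DERIV_chain2[OF has_field_derivative_Ln[OF rn] drho] rn0 by (simp add: field_simps)
  have d5: "(F5 has_field_derivative F5 u * (be * lr)) (at u)"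
    unfolding F5_def[abs_def] using DERIV_chain2[OF DERIV_exp DERIV_cmult[OF dln, of be]] by (simp add: algebra_simps)
  have hd: "(Hf has_field_derivative Hf u * (Z (v - u) + - Z v + m1 / 2 + be * lr)) (at u)"
  proof -
    have "((\<lambda>x. F2 x * F3 x * F4 x * F5 x) has_field_derivative F2 u * F3 u * F4 u * F5 u * (Z (v - u) + - Z v + m1 / 2 + be * lr)) (at u)"
      using logd_mult[OF logd_mult[OF logd_mult[OF d2 d3] d4] d5] by (simp add: algebra_simps)
    then show ?thesis unfolding Hf_def[abs_def] .
  qed
  have "((\<lambda>x. \<sigma> x * Hf x) has_field_derivative \<sigma> u * Hf u * (Z u + (Z (v - u) + - Z v + m1 / 2 + be * lr))) (at u)"
    by (rule logd_mult[OF d1 hd])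
  moreover have "Z u + (Z (v - u) + - Z v + m1 / 2 + be * lr) = Kf u"
    unfolding Kf_def lr_def be_def by (simp add: field_simps)
  ultimately show ?thesis by simp
qed

lemma Hf_tendsto: "(Hf \<longlongrightarrow> 1) (at 0)"
proof -
  have a: "((\<lambda>u. \<sigma> (v - u)) \<longlongrightarrow> \<sigma> v) (at 0)"
    by (rule comp_sub_tendsto) (use sig_isCont in \<open>simp add: isCont_def\<close>)
  have lnc: "isCont Ln 1" by (rule DERIV_isCont[OF has_field_derivative_Ln]) (auto simp: complex_nonpos_Reals_iff)
  have l: "((\<lambda>u. Ln (rho u)) \<longlongrightarrow> Ln 1) (at 0)" by (rule isCont_tendsto_compose[OF lnc rho_tendsto])
  have "(Hf \<longlongrightarrow> \<sigma> v / \<sigma> v * exp (- Z v * 0) * exp (m1 / 2 * 0) * exp (be * Ln 1)) (at 0)"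
    unfolding Hf_def[abs_def] F2_def F3_def F4_def F5_def
    by (rule tendsto_intros a l tendsto_ident_at | use v_reg in simp)+
  then show ?thesis using v_reg by simp
qed

lemma main: "\<exists>r>0. \<forall>u \<in> ball 0 r - {0}. 1 / \<Psi> u = G u"
proof -
  have evB: "eventually (\<lambda>u. u \<in> ball 0 rp) (at (0::complex))"
    using rp by (auto simp: eventually_at dist_commute intro!: exI[of _ rp])
  define Q where "Q x = \<Psi> x * (\<sigma> x * Hf x)" for x
  have "eventually (\<lambda>u. u \<noteq> 0 \<and> G u = \<sigma> u * Hf u \<and> (Q has_field_derivative 0) (at u)) (at 0)"
    using K_eq ev_rho evB
  proof eventually_elim
    case (elim u)
    then have u: "u \<in> S" "u \<noteq> 0" "v - u \<in> S" "v + u \<in> S" "f u \<noteq> 0" "1 / f u = Kf u"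
      "Re (rho u) > 0" "u \<in> ball 0 rp" by auto
    have dP: "(\<Psi> has_field_derivative - \<Psi> u / f u) (at u)" using Psi_ode u(2,8) by auto
    have "(Q has_field_derivative (- \<Psi> u / f u) * (\<sigma> u * Hf u) + (\<sigma> u * Hf u * Kf u) * \<Psi> u) (at u)"
      unfolding Q_def[abs_def] by (rule DERIV_mult[OF dP Hd[OF u(1,3,4,7)]])
    moreover have "(- \<Psi> u / f u) * (\<sigma> u * Hf u) + (\<sigma> u * Hf u * Kf u) * \<Psi> u = 0"
    proof -
      have "- \<Psi> u / f u = - \<Psi> u * (1 / f u)" by simp
      then have "- \<Psi> u / f u = - \<Psi> u * Kf u" unfolding u(6) .
      then show ?thesis by (simp add: algebra_simps)
    qed
    ultimately show ?case using G_eq[OF u(1,3,4,7)] u(2) by simp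
  qed
  then obtain d where d: "d > 0" and dQ: "\<And>u. u \<noteq> 0 \<Longrightarrow> dist u 0 < d \<Longrightarrow>
      G u = \<sigma> u * Hf u \<and> (Q has_field_derivative 0) (at u)"
    unfolding eventually_at by auto
  define B where "B = ball (0::complex) d - {0}"
  have Bc: "connected B" unfolding B_def by (rule connected_punctured_ball) simp
  have Bo: "open B" unfolding B_def by (simp add: open_Diff)
  have Bd: "(Q has_field_derivative 0) (at x)" if "x \<in> B" for x
    using dQ[of x] that unfolding B_def by (auto simp: dist_commute)
  have Qc: "continuous_on B Q"
  proof (rule continuous_at_imp_continuous_on, rule ballI)
    fix x :: complex assume "x \<in> B"
    from Bd[OF this] show "isCont Q x" by (rule DERIV_isCont)
  qed
  obtain c where c: "\<And>x. x \<in> B \<Longrightarrow> Q x = c"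
    using DERIV_zero_connected_constant[OF Bc Bo finite.emptyI Qc] Bd by blast
  have evBd: "eventually (\<lambda>u. u \<in> B) (at 0)"
    using d by (auto simp: eventually_at dist_commute B_def intro!: exI[of _ d])
  have Qc_lim: "(Q \<longlongrightarrow> c) (at 0)"
    by (rule tendsto_eventually) (use evBd in \<open>eventually_elim, simp add: c\<close>)
  obtain L where L: "((\<lambda>u. \<Psi> u - 1 / u) \<longlongrightarrow> L) (at 0)" using Psi_lim by blast
  have uP: "((\<lambda>u. u * \<Psi> u) \<longlongrightarrow> 1) (at 0)"
  proof -
    have "((\<lambda>u. u * (\<Psi> u - 1 / u) + 1) \<longlongrightarrow> 0 * L + 1) (at 0)"
      by (intro tendsto_intros L tendsto_ident_at)
    moreover have "eventually (\<lambda>u. u * (\<Psi> u - 1 / u) + 1 = u * \<Psi> u) (at (0::complex))"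
      by (auto simp: eventually_at_filter right_diff_distrib)
    ultimately show ?thesis by (simp add: tendsto_cong)
  qed
  obtain h where h: "h holomorphic_on UNIV" "\<And>u. \<sigma> u = u + u^5 * h u" by (rule h_ex) blast
  have su: "((\<lambda>u. \<sigma> u / u) \<longlongrightarrow> 1) (at 0)"
  proof -
    have hc: "(h \<longlongrightarrow> h 0) (at 0)" by (rule hol_tendsto[OF h(1) open_UNIV]) simp
    have "((\<lambda>u. 1 + u^4 * h u) \<longlongrightarrow> 1 + 0^4 * h 0) (at 0)"
      by (intro tendsto_intros hc tendsto_ident_at)
    moreover have "eventually (\<lambda>u. 1 + u^4 * h u = \<sigma> u / u) (at (0::complex))"
      by (auto simp: eventually_at_filter h(2) field_simps power_numeral_reduce)
    ultimately show ?thesis by (simp add: tendsto_cong)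
  qed
  have "((\<lambda>u. u * \<Psi> u * (\<sigma> u / u) * Hf u) \<longlongrightarrow> 1 * 1 * 1) (at 0)"
    by (intro tendsto_intros uP su Hf_tendsto)
  moreover have "eventually (\<lambda>u. u * \<Psi> u * (\<sigma> u / u) * Hf u = Q u) (at (0::complex))"
    by (auto simp: eventually_at_filter Q_def field_simps)
  ultimately have Q1: "(Q \<longlongrightarrow> 1) (at 0)" by (simp add: tendsto_cong)
  have c1: "c = 1" by (rule tendsto_unique[OF _ Qc_lim Q1]) simp
  show ?thesis
  proof (intro exI[of _ d] conjI ballI)
    show "d > 0" by (rule d)
    fix u :: complex assume u: "u \<in> ball 0 d - {0}"
    then have uB: "u \<in> B" unfolding B_def by simp
    have "Q u = 1" using c[OF uB] c1 by simp
    moreover have "G u = \<sigma> u * Hf u" using dQ[of u] u by (auto simp: dist_commute)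
    ultimately have q: "\<Psi> u * (\<sigma> u * Hf u) = 1" and g: "G u = \<sigma> u * Hf u" unfolding Q_def by auto
    have pn: "\<Psi> u \<noteq> 0" using q by auto
    show "1 / \<Psi> u = G u" unfolding g using q pn by (simp add: field_simps)
  qed
qed

end

theorem mainTheorem17:
  fixes m1 m2 m3 m4 m6 g2 g3 v w :: complex
    and \<sigma> s f \<Psi> :: "complex \<Rightarrow> complex"
    and rs rf rp :: real
  assumes g2: "g2 = (4 * m2 + m1 ^ 2) ^ 2 / 12 - 2 * (m1 * m3 + 2 * m4)"
    and g3: "g3 = (m1 * m3 + 2 * m4) * (4 * m2 + m1 ^ 2) / 6 - (4 * m2 + m1 ^ 2) ^ 3 / 216
               - 4 * m6 - m3 ^ 2"
    and disc: "g2 ^ 3 - 27 * g3 ^ 2 \<noteq> 0"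
    and sigma: "is_weierstrass_sigma g2 g3 \<sigma>"
    and v_reg: "\<sigma> v \<noteq> 0"
    and v_val: "wp \<sigma> v = (4 * m2 + m1 ^ 2) / 12"
    and v_der: "deriv (wp \<sigma>) v \<noteq> 0"
    and w_reg: "\<sigma> w \<noteq> 0"
    and w_der: "deriv (wp \<sigma>) w = - m3"
    and s: "tate_s m1 m2 m3 m4 m6 rs s"
    and f: "fgl_exponential m1 m2 m3 m4 m6 s rf f"
    and rp: "rp > 0"
    and Psi_ode: "\<forall>u \<in> ball 0 rp - {0}. (\<Psi> has_field_derivative (- \<Psi> u / f u)) (at u)"
    and Psi_lim: "\<exists>L. ((\<lambda>u. \<Psi> u - 1 / u) \<longlongrightarrow> L) (at 0)"
  shows "\<exists>r>0. \<forall>u \<in> ball 0 r - {0}.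
           1 / \<Psi> u = inverse (wPhi \<sigma> u v) * exp (m1 / 2 * u)
             * (wPhi \<sigma> u v / wPhi \<sigma> u (- v))
                 powr ((1 - deriv (wp \<sigma>) w / deriv (wp \<sigma>) v) / 2)"
  proof -
  interpret mainloc g2 g3 \<sigma> m1 m2 m3 m4 m6 s f rs rf v w \<Psi> rp
    by (unfold_locales; (rule assms)?)
  show ?thesis using main unfolding G_def .
qed

end
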